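(* Let $X$ be a Banach space with the Approximation Property, and assume that $\ell_\infty$ embeds isomorphically into $\mathcal{L}(X)$. Then $\ell_1$ embeds isomorphically as a complemented subspace of $\mathcal{N}(X)$.
   Context: $\mathcal{L}(X)$ is the space of bounded linear operators on $X$ with the operator norm. $\mathcal{N}(X)$ is the space of nuclear operators on $X$: the operators $T=\sum_{n=1}^\infty x_n^*\otimes y_n$ with $x_n^*\in X^*$, $y_n\in X$, $\sum_n\|x_n^*\|\|y_n\|<\infty$ (where $(x^*\otimes y)(x)=x^*(x)y$), equipped with the nuclear norm $\nu(T)=\inf\sum_n\|x_n^*\|\|y_n\|$, the infimum over all such representations of $T$. *)

theory Defs
  imports "HOL-Analysis.Analysis"
begin

(* L(X) is the type of bounded linear operators 'a =>L 'a (blinfun) with the operator norm;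
  X* is 'a =>L real. The space l_infinity is the type nat =>C real
  of bounded (continuous) real sequences with the sup norm. *)

definition finite_rank :: "('a::real_normed_vector \<Rightarrow>\<^sub>L 'b::real_normed_vector) \<Rightarrow> bool" where
  "finite_rank T \<longleftrightarrow> (\<exists>B. finite B \<and> range (blinfun_apply T) \<subseteq> span B)"

definition approximation_property :: "'a::banach itself \<Rightarrow> bool" where
  "approximation_property _ \<longleftrightarrow>
     (\<forall>K::'a set. \<forall>\<epsilon>>0. compact K \<longrightarrow>
        (\<exists>T::'a \<Rightarrow>\<^sub>L 'a. finite_rank T \<and> (\<forall>x\<in>K. norm (T x - x) \<le> \<epsilon>)))"

definition iso_embedding :: "('a::real_normed_vector \<Rightarrow> 'b::real_normed_vector) \<Rightarrow> bool" where
  "iso_embedding T \<longleftrightarrow> bounded_linear T \<and> (\<exists>c>0. \<forall>x. c * norm x \<le> norm (T x))"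

definition nuclear_rep :: "('a::banach \<Rightarrow>\<^sub>L 'a) \<Rightarrow> (nat \<Rightarrow> ('a \<Rightarrow>\<^sub>L real)) \<Rightarrow> (nat \<Rightarrow> 'a) \<Rightarrow> bool" where
  "nuclear_rep T xs ys \<longleftrightarrow> summable (\<lambda>n. norm (xs n) * norm (ys n)) \<and>
     (\<forall>x. blinfun_apply T x = (\<Sum>n. blinfun_apply (xs n) x *\<^sub>R ys n))"

definition nuclear_ops :: "('a::banach \<Rightarrow>\<^sub>L 'a) set" where
  "nuclear_ops = {T. \<exists>xs ys. nuclear_rep T xs ys}"

definition nuclear_norm :: "('a::banach \<Rightarrow>\<^sub>L 'a) \<Rightarrow> real" where
  "nuclear_norm T = Inf {(\<Sum>n. norm (xs n) * norm (ys n)) | xs ys. nuclear_rep T xs ys}"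

definition ell1 :: "(nat \<Rightarrow> real) set" where
  "ell1 = {f. summable (\<lambda>n. \<bar>f n\<bar>)}"

definition ell1_norm :: "(nat \<Rightarrow> real) \<Rightarrow> real" where
  "ell1_norm f = (\<Sum>n. \<bar>f n\<bar>)"

definition linear_on_set :: "'a::real_vector set \<Rightarrow> ('a \<Rightarrow> 'b::real_vector) \<Rightarrow> bool" where
  "linear_on_set S f \<longleftrightarrow> (\<forall>x\<in>S. \<forall>y\<in>S. \<forall>a b. f (a *\<^sub>R x + b *\<^sub>R y) = a *\<^sub>R f x + b *\<^sub>R f y)"

definition ell1_complemented_in_nuclear :: "'a::banach itself \<Rightarrow> bool" where
  "ell1_complemented_in_nuclear _ \<longleftrightarrow>
    (\<exists>(J :: (nat \<Rightarrow> real) \<Rightarrow> ('a \<Rightarrow>\<^sub>L 'a)) (P :: ('a \<Rightarrow>\<^sub>L 'a) \<Rightarrow> ('a \<Rightarrow>\<^sub>L 'a)) c C D.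
       J ` ell1 \<subseteq> nuclear_ops \<and>
       (\<forall>f\<in>ell1. \<forall>g\<in>ell1. \<forall>a b. J (\<lambda>n. a * f n + b * g n) = a *\<^sub>R J f + b *\<^sub>R J g) \<and> 0 < c \<and>
       (\<forall>f\<in>ell1. c * ell1_norm f \<le> nuclear_norm (J f) \<and> nuclear_norm (J f) \<le> C * ell1_norm f) \<and>
       linear_on_set nuclear_ops P \<and>
       (\<forall>T\<in>nuclear_ops. P (P T) = P T \<and> nuclear_norm (P T) \<le> D * nuclear_norm T) \<and>
       P ` nuclear_ops = J ` ell1)"

end

theory Submission
  imports Defs "HOL-Library.Diagonal_Subsequence"
begin

lemma subspace_chain_Union:
  assumes "C \<noteq> {}" "\<forall>G\<in>C. subspace G" "\<forall>G\<in>C. \<forall>H\<in>C. G \<subseteq> H \<or> H \<subseteq> G"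
  shows "subspace (\<Union>C)"
  unfolding subspace_def
proof (intro conjI ballI allI)
  obtain G where "G \<in> C" using assms(1) by blast
  then show "0 \<in> \<Union>C" using assms(2) subspace_0 by blast
next
  fix x z assume "x \<in> \<Union>C" "z \<in> \<Union>C"
  then obtain G H where GH: "G \<in> C" "H \<in> C" "x \<in> G" "z \<in> H" by blast
  then consider "G \<subseteq> H" | "H \<subseteq> G" using assms(3) by blast
  then show "x + z \<in> \<Union>C"
  proof cases
    case 1 then show ?thesis using GH assms(2) subspace_add by blast
  next
    case 2 then show ?thesis using GH assms(2) subspace_add by blast
  qed
next
  fix c x assume "x \<in> \<Union>C"
  then obtain G where "G \<in> C" "x \<in> G" by blast
  then show "c *\<^sub>R x \<in> \<Union>C" using assms(2) subspace_scale by blast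
qed

lemma hb_norming:
  fixes y :: "'a::real_normed_vector"
  shows "\<exists>f::'a \<Rightarrow>\<^sub>L real. norm f \<le> 1 \<and> blinfun_apply f y = norm y"
proof -
  define A where "A = {G :: ('a \<times> real) set. subspace G \<and> (\<forall>p\<in>G. snd p \<le> norm (fst p)) \<and> (y, norm y) \<in> G}"
  have A0: "span {(y, norm y)} \<in> A"
  proof -
    have "snd p \<le> norm (fst p)" if "p \<in> span {(y, norm y)}" for p
    proof -
      have "p \<in> range (\<lambda>k. k *\<^sub>R (y, norm y))" using that by (simp add: span_singleton)
      then obtain k where "p = k *\<^sub>R (y, norm y)" by blast
      then show ?thesis by (simp add: abs_ge_self mult_right_mono)
    qed
    then show ?thesis unfolding A_def by (auto intro: span_base)
  qed
  have "\<exists>M\<in>A. \<forall>X\<in>A. M \<subseteq> X \<longrightarrow> X = M"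
  proof (rule subset_Zorn_nonempty)
    show "A \<noteq> {}" using A0 by blast
  next
    fix C assume C: "C \<noteq> {}" "subset.chain A C"
    then have CA: "C \<subseteq> A" and ch: "\<forall>G\<in>C. \<forall>H\<in>C. G \<subseteq> H \<or> H \<subseteq> G"
      by (auto simp: subset.chain_def)
    have "subspace (\<Union>C)" using subspace_chain_Union[OF C(1)] CA ch unfolding A_def by blast
    moreover have "\<forall>p\<in>\<Union>C. snd p \<le> norm (fst p)" using CA unfolding A_def by blast
    moreover have "(y, norm y) \<in> \<Union>C" using CA C(1) unfolding A_def by blast
    ultimately show "\<Union>C \<in> A" unfolding A_def by blast
  qed
  then obtain M where MA: "M \<in> A" and Mmax: "\<And>X. X \<in> A \<Longrightarrow> M \<subseteq> X \<Longrightarrow> X = M" by blast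
  have Msub: "subspace M" and Mdom: "\<And>s a. (s, a) \<in> M \<Longrightarrow> a \<le> norm s" and My: "(y, norm y) \<in> M"
    using MA unfolding A_def by auto
  have uniq: "a = b" if "(x, a) \<in> M" "(x, b) \<in> M" for x a b
  proof -
    have "(0, a - b) \<in> M" using subspace_diff[OF Msub that(1) that(2)] by simp
    then have "a - b \<le> 0" using Mdom by fastforce
    moreover have "(0, b - a) \<in> M" using subspace_diff[OF Msub that(2) that(1)] by simp
    then have "b - a \<le> 0" using Mdom by fastforce
    ultimately show ?thesis by simp
  qed
  have total: "\<exists>a. (x, a) \<in> M" for x
  proof (rule ccontr)
    assume nz: "\<not> (\<exists>a. (x, a) \<in> M)"
    define S where "S = {a - norm (s - x) | s a. (s, a) \<in> M}"
    define c where "c = Sup S"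
    have M0: "(0, 0) \<in> M" using Msub subspace_0 by (metis zero_prod_def)
    have key: "a1 - norm (s1 - x) \<le> norm (s2 + x) - a2" if "(s1, a1) \<in> M" "(s2, a2) \<in> M" for s1 a1 s2 a2
    proof -
      have "(s1, a1) + (s2, a2) \<in> M" using that Msub subspace_add by blast
      then have "a1 + a2 \<le> norm (s1 + s2)" using Mdom by simp
      also have "\<dots> = norm ((s1 - x) + (s2 + x))" by (simp add: algebra_simps)
      also have "\<dots> \<le> norm (s1 - x) + norm (s2 + x)" by (rule norm_triangle_ineq)
      finally show ?thesis by simp
    qed
    have Sne: "S \<noteq> {}" using M0 unfolding S_def by blast
    have Sbdd: "bdd_above S" unfolding S_def bdd_above_def using key[OF _ M0] by auto
    have c_le: "c \<le> norm (s + x) - a" if "(s, a) \<in> M" for s a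
      unfolding c_def using Sne by (rule cSup_least) (use key[OF _ that] S_def in auto)
    have c_ge: "a - norm (s - x) \<le> c" if "(s, a) \<in> M" for s a
      unfolding c_def by (rule cSup_upper[OF _ Sbdd]) (use that S_def in auto)
    define M' where "M' = span (insert (x, c) M)"
    have "M' \<in> A"
    proof -
      have "snd p \<le> norm (fst p)" if "p \<in> M'" for p
      proof -
        have spM: "span M = M" using Msub by simp
        have "\<exists>k. p - k *\<^sub>R (x, c) \<in> M" using that unfolding M'_def span_insert spM by blast
        then obtain k where kq: "p - k *\<^sub>R (x, c) \<in> M" by blast
        define s where "s = fst (p - k *\<^sub>R (x, c))"
        define a where "a = snd (p - k *\<^sub>R (x, c))"
        have e: "p - k *\<^sub>R (x, c) = (s, a)" unfolding s_def a_def by (simp add: prod_eq_iff)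
        have sa1: "(s, a) \<in> M" using kq unfolding e .
        have "p = (s, a) + k *\<^sub>R (x, c)" by (metis e diff_add_cancel)
        then have sa: "(s, a) \<in> M" "p = (s + k *\<^sub>R x, a + k * c)" using sa1 by auto
        consider "k = 0" | "k > 0" | "k < 0" by linarith
        then show ?thesis
        proof cases
          case 1 then show ?thesis using sa Mdom by simp
        next
          case 2
          have "(inverse k *\<^sub>R s, inverse k * a) \<in> M"
            using subspace_scale[OF Msub sa(1), of "inverse k"] by simp
          from c_le[OF this] have cl: "c \<le> norm (inverse k *\<^sub>R s + x) - inverse k * a" .
          have "k * c \<le> k * (norm (inverse k *\<^sub>R s + x) - inverse k * a)"
            using mult_left_mono[OF cl, of k] 2 by simp
          then have h1: "k * c \<le> k * norm (inverse k *\<^sub>R s + x) - a"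
            using 2 by (simp add: right_diff_distrib mult.assoc[symmetric])
          have "k * norm (inverse k *\<^sub>R s + x) = norm (k *\<^sub>R (inverse k *\<^sub>R s + x))"
            using 2 by simp
          also have "k *\<^sub>R (inverse k *\<^sub>R s + x) = s + k *\<^sub>R x"
            using 2 by (simp add: scaleR_add_right)
          finally show ?thesis using h1 sa by simp
        next
          case 3
          define u where "u = - k"
          have u: "u > 0" using 3 u_def by simp
          have "(inverse u *\<^sub>R s, inverse u * a) \<in> M"
            using subspace_scale[OF Msub sa(1), of "inverse u"] by simp
          from c_ge[OF this] have cl: "inverse u * a - norm (inverse u *\<^sub>R s - x) \<le> c" .
          have "u * (inverse u * a - norm (inverse u *\<^sub>R s - x)) \<le> u * c"
            using mult_left_mono[OF cl, of u] u by simp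
          then have h1: "a - u * norm (inverse u *\<^sub>R s - x) \<le> u * c"
            using u by (simp add: right_diff_distrib mult.assoc[symmetric])
          have "u * norm (inverse u *\<^sub>R s - x) = norm (u *\<^sub>R (inverse u *\<^sub>R s - x))"
            using u by simp
          also have "u *\<^sub>R (inverse u *\<^sub>R s - x) = s + k *\<^sub>R x"
            using u by (simp add: scaleR_diff_right u_def)
          finally show ?thesis using h1 sa u_def by simp
        qed
      qed
      moreover have "(y, norm y) \<in> M'" unfolding M'_def using My by (simp add: span_base)
      ultimately show ?thesis unfolding A_def M'_def by auto
    qed
    moreover have "M \<subseteq> M'" unfolding M'_def by (meson span_superset subset_insertI subset_trans)
    ultimately have "M' = M" using Mmax by blast
    moreover have "(x, c) \<in> M'" unfolding M'_def by (simp add: span_base)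
    ultimately show False using nz by blast
  qed
  define f where "f x = (THE a. (x, a) \<in> M)" for x
  have fM: "(x, f x) \<in> M" for x
  proof -
    have "\<exists>!a. (x, a) \<in> M" using total uniq by blast
    then show ?thesis unfolding f_def by (rule theI')
  qed
  have fadd: "f (x + z) = f x + f z" for x z
  proof -
    have "(x + z, f x + f z) \<in> M" using subspace_add[OF Msub fM fM] by simp
    then show ?thesis using uniq fM by blast
  qed
  have fscale: "f (r *\<^sub>R x) = r * f x" for r x
  proof -
    have "(r *\<^sub>R x, r * f x) \<in> M" using subspace_scale[OF Msub fM, of r] by simp
    then show ?thesis using uniq fM by blast
  qed
  have fle: "f x \<le> norm x" for x using Mdom fM by blast
  have fabs: "norm (f x) \<le> 1 * norm x" for x
  proof -
    have "f (- x) \<le> norm x" using fle[of "-x"] by simp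
    moreover have "f (- x) = - f x" using fscale[of "-1" x] by simp
    ultimately show ?thesis using fle[of x] by auto
  qed
  have bl: "bounded_linear f"
    by (rule bounded_linear_intro[of _ 1]) (use fadd fscale fabs in auto)
  show ?thesis
  proof (intro exI conjI)
    show "norm (Blinfun f) \<le> 1"
      using fabs by (intro norm_blinfun_bound) (auto simp: bounded_linear_Blinfun_apply[OF bl])
    show "blinfun_apply (Blinfun f) y = norm y"
      using uniq[OF fM My] by (simp add: bounded_linear_Blinfun_apply[OF bl])
  qed
qed

lemma closed_span_of_coord_bound:
  fixes B :: "'a::real_normed_vector set"
  assumes fin: "finite B" and C: "\<And>c b. b \<in> B \<Longrightarrow> \<bar>c b\<bar> \<le> C * norm (\<Sum>b\<in>B. c b *\<^sub>R b)"
  shows "closed (span B)"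
proof (unfold closed_sequential_limits, intro allI impI, elim conjE)
  fix w l assume w: "\<forall>n. w n \<in> span B" and wl: "w \<longlonglongrightarrow> l"
  have ex: "\<exists>u. (\<Sum>b\<in>B. u b *\<^sub>R b) = w n" for n
  proof -
    have "w n \<in> range (\<lambda>u. \<Sum>v\<in>B. u v *\<^sub>R v)" using w[rule_format, of n] unfolding span_finite[OF fin] .
    then obtain u where "w n = (\<Sum>v\<in>B. u v *\<^sub>R v)" by blast
    then show ?thesis by (intro exI[of _ u]) simp
  qed
  define u where "u n = (SOME u. (\<Sum>b\<in>B. u b *\<^sub>R b) = w n)" for n
  have u: "(\<Sum>b\<in>B. u n b *\<^sub>R b) = w n" for n
    unfolding u_def by (rule someI_ex[OF ex])
  have conv: "convergent (\<lambda>n. u n b)" if b: "b \<in> B" for b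
  proof -
    have cw: "Cauchy w" using wl by (rule LIMSEQ_imp_Cauchy)
    have "Cauchy (\<lambda>n. u n b)"
    proof (rule metric_CauchyI)
      fix e :: real assume e: "e > 0"
      obtain N where N: "\<And>m n. m \<ge> N \<Longrightarrow> n \<ge> N \<Longrightarrow> dist (w m) (w n) < e / (\<bar>C\<bar> + 1)"
        using metric_CauchyD[OF cw, of "e / (\<bar>C\<bar> + 1)"] e by (auto simp: add_pos_nonneg)
      show "\<exists>N. \<forall>m\<ge>N. \<forall>n\<ge>N. dist (u m b) (u n b) < e"
      proof (intro exI allI impI)
        fix m n assume mn: "m \<ge> N" "n \<ge> N"
        have "\<bar>u m b - u n b\<bar> \<le> C * norm (\<Sum>b\<in>B. (u m b - u n b) *\<^sub>R b)"
          using C[OF b, of "\<lambda>b. u m b - u n b"] by simp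
        also have "(\<Sum>b\<in>B. (u m b - u n b) *\<^sub>R b) = w m - w n"
          by (simp add: scaleR_diff_left sum_subtractf u)
        also have "C * norm (w m - w n) \<le> \<bar>C\<bar> * norm (w m - w n)"
          by (intro mult_right_mono) auto
        also have "\<dots> \<le> \<bar>C\<bar> * (e / (\<bar>C\<bar> + 1))"
          using N[OF mn] by (intro mult_left_mono) (auto simp: dist_norm)
        also have "\<dots> < e"
        proof -
          have "\<bar>C\<bar> * (e / (\<bar>C\<bar> + 1)) = e * (\<bar>C\<bar> / (\<bar>C\<bar> + 1))" by simp
          also have "\<dots> < e * 1" using e by (intro mult_strict_left_mono) auto
          finally show ?thesis by simp
        qed
        finally show "dist (u m b) (u n b) < e" by (simp add: dist_real_def)
      qed
    qed
    then show ?thesis by (simp add: Cauchy_convergent_iff)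
  qed
  define v where "v b = lim (\<lambda>n. u n b)" for b
  have "(\<lambda>n. u n b) \<longlonglongrightarrow> v b" if "b \<in> B" for b
    using conv[OF that] unfolding v_def by (simp add: convergent_LIMSEQ_iff)
  then have "(\<lambda>n. \<Sum>b\<in>B. u n b *\<^sub>R b) \<longlonglongrightarrow> (\<Sum>b\<in>B. v b *\<^sub>R b)"
    by (intro tendsto_intros) auto
  then have "w \<longlonglongrightarrow> (\<Sum>b\<in>B. v b *\<^sub>R b)" using u by simp
  then have "l = (\<Sum>b\<in>B. v b *\<^sub>R b)" using wl LIMSEQ_unique by blast
  then show "l \<in> span B" by (simp add: span_sum span_scale span_base)
qed

lemma coord_bound:
  fixes B :: "'a::real_normed_vector set"
  assumes "finite B" "independent B"
  shows "\<exists>C\<ge>0. \<forall>c. \<forall>b\<in>B. \<bar>c b\<bar> \<le> C * norm (\<Sum>b\<in>B. c b *\<^sub>R b)"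
  using assms
proof (induction B rule: finite_induct)
  case empty then show ?case by auto
next
  case (insert e B0)
  have ind: "independent B0" and enot: "e \<notin> span B0"
    using insert.prems insert.hyps(2) by (auto simp: independent_insert)
  obtain C0 where C0: "C0 \<ge> 0" "\<And>c b. b \<in> B0 \<Longrightarrow> \<bar>c b\<bar> \<le> C0 * norm (\<Sum>b\<in>B0. c b *\<^sub>R b)"
    using insert.IH[OF ind] by blast
  have cl: "closed (span B0)" by (rule closed_span_of_coord_bound[where C=C0, OF insert.hyps(1)], erule C0(2))
  define d where "d = infdist e (span B0)"
  have ne: "span B0 \<noteq> {}" using span_zero by blast
  have "d \<noteq> 0" using in_closed_iff_infdist_zero[OF cl ne, of e] enot unfolding d_def by simp
  then have dpos: "d > 0" using infdist_nonneg[of e "span B0"] unfolding d_def by linarith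
  define C where "C = max (1 / d) (C0 * (1 + norm e / d))"
  show ?case
  proof (intro exI conjI allI ballI)
    show "C \<ge> 0" unfolding C_def using dpos by (simp add: le_max_iff_disj)
  next
    fix c b assume b: "b \<in> insert e B0"
    define s where "s = (\<Sum>b\<in>B0. c b *\<^sub>R b)"
    define t where "t = c e"
    have w: "(\<Sum>b\<in>insert e B0. c b *\<^sub>R b) = s + t *\<^sub>R e"
      using insert.hyps unfolding s_def t_def by simp
    have td: "\<bar>t\<bar> * d \<le> norm (s + t *\<^sub>R e)"
    proof (cases "t = 0")
      case True then show ?thesis by simp
    next
      case False
      have "- (inverse t *\<^sub>R s) \<in> span B0" unfolding s_def
        by (intro span_neg span_scale span_sum span_base) auto
      then have "d \<le> dist e (- (inverse t *\<^sub>R s))" unfolding d_def by (rule infdist_le)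
      also have "dist e (- (inverse t *\<^sub>R s)) = norm (inverse t *\<^sub>R (s + t *\<^sub>R e))"
        using False by (simp add: dist_norm scaleR_add_right add.commute)
      also have "\<dots> = norm (s + t *\<^sub>R e) / \<bar>t\<bar>" by (simp add: divide_inverse_commute)
      finally show ?thesis using False by (simp add: field_simps)
    qed
    show "\<bar>c b\<bar> \<le> C * norm (\<Sum>b\<in>insert e B0. c b *\<^sub>R b)"
    proof (cases "b = e")
      case True
      have "\<bar>c b\<bar> \<le> (1 / d) * norm (s + t *\<^sub>R e)"
        using td dpos True unfolding t_def by (simp add: field_simps)
      also have "\<dots> \<le> C * norm (s + t *\<^sub>R e)" unfolding C_def by (intro mult_right_mono) auto
      finally show ?thesis using w by simp
    next
      case False
      then have bB0: "b \<in> B0" using b by simp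
      have "norm s \<le> norm (s + t *\<^sub>R e) + \<bar>t\<bar> * norm e"
        using norm_triangle_ineq4[of "s + t *\<^sub>R e" "t *\<^sub>R e"] by simp
      also have "\<bar>t\<bar> * norm e \<le> (norm (s + t *\<^sub>R e) / d) * norm e"
        using td dpos by (intro mult_right_mono) (auto simp: field_simps)
      finally have ns: "norm s \<le> (1 + norm e / d) * norm (s + t *\<^sub>R e)"
        by (simp add: field_simps)
      have "\<bar>c b\<bar> \<le> C0 * norm s" using C0(2)[OF bB0] unfolding s_def .
      also have "\<dots> \<le> C0 * ((1 + norm e / d) * norm (s + t *\<^sub>R e))"
        using ns C0(1) by (rule mult_left_mono)
      also have "\<dots> = (C0 * (1 + norm e / d)) * norm (s + t *\<^sub>R e)" by simp
      also have "\<dots> \<le> C * norm (s + t *\<^sub>R e)" unfolding C_def by (intro mult_right_mono) auto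
      finally show ?thesis using w by simp
    qed
  qed
qed

lemma finite_rank_decomp:
  fixes F :: "'a::real_normed_vector \<Rightarrow>\<^sub>L 'b::real_normed_vector"
  assumes "finite_rank F"
  shows "\<exists>B g. finite B \<and> (\<forall>b\<in>B. bounded_linear (g b)) \<and> (\<forall>x. blinfun_apply F x = (\<Sum>b\<in>B. g b x *\<^sub>R b))"
proof -
  obtain B1 where B1: "finite B1" "range (blinfun_apply F) \<subseteq> span B1"
    using assms unfolding finite_rank_def by blast
  obtain B where B: "B \<subseteq> B1" "independent B" "B1 \<subseteq> span B"
    using maximal_independent_subset by blast
  have finB: "finite B" using B(1) B1(1) finite_subset by blast
  have spB: "blinfun_apply F x \<in> span B" for x
  proof -
    have "span B1 \<subseteq> span B" by (rule span_minimal[OF B(3) subspace_span])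
    then show ?thesis using B1(2) by blast
  qed
  obtain C where C: "C \<ge> 0" "\<And>c b. b \<in> B \<Longrightarrow> \<bar>c b\<bar> \<le> C * norm (\<Sum>b\<in>B. c b *\<^sub>R b)"
    using coord_bound[OF finB B(2)] by blast
  define g where "g b x = representation B (blinfun_apply F x) b" for b x
  have rep: "blinfun_apply F x = (\<Sum>b\<in>B. g b x *\<^sub>R b)" for x
    unfolding g_def using sum_representation_eq[OF B(2) spB finB] by simp
  have "bounded_linear (g b)" if "b \<in> B" for b
  proof (rule bounded_linear_intro[of _ "C * norm F"])
    fix x y show "g b (x + y) = g b x + g b y"
      unfolding g_def by (simp add: blinfun.add_right representation_add[OF B(2) spB spB])
  next
    fix r x show "g b (r *\<^sub>R x) = r *\<^sub>R g b x"
      unfolding g_def by (simp add: blinfun.scaleR_right representation_scale[OF B(2) spB])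
  next
    fix x
    have "\<bar>g b x\<bar> \<le> C * norm (\<Sum>b\<in>B. g b x *\<^sub>R b)" using C(2)[OF that] .
    also have "\<dots> = C * norm (blinfun_apply F x)" using rep by simp
    also have "\<dots> \<le> C * (norm F * norm x)" by (rule mult_left_mono[OF norm_blinfun C(1)])
    finally show "norm (g b x) \<le> norm x * (C * norm F)" by (simp add: mult.commute mult.left_commute)
  qed
  then show ?thesis using finB rep by blast
qed

lemma compact_conv_seq:
  fixes f :: "nat \<Rightarrow> 'a::metric_space"
  assumes fl: "f \<longlonglongrightarrow> l"
  shows "compact (insert l (range f))"
proof (rule compactI)
  fix C assume op: "\<forall>t\<in>C. open t" and cov: "insert l (range f) \<subseteq> \<Union>C"
  obtain U where U: "U \<in> C" "l \<in> U" using cov by blast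
  have "eventually (\<lambda>n. f n \<in> U) sequentially"
    using topological_tendstoD[OF fl] op U by blast
  then obtain N where N: "\<And>n. n \<ge> N \<Longrightarrow> f n \<in> U" unfolding eventually_sequentially by blast
  have "\<forall>n. \<exists>V. V \<in> C \<and> f n \<in> V" using cov by blast
  then obtain V where V: "\<And>n. V n \<in> C" "\<And>n. f n \<in> V n" by metis
  define C' where "C' = insert U (V ` {..<N})"
  have "insert l (range f) \<subseteq> \<Union>C'"
  proof
    fix x assume "x \<in> insert l (range f)"
    then consider "x = l" | n where "x = f n" by blast
    then show "x \<in> \<Union>C'"
    proof cases
      case 1 then show ?thesis using U unfolding C'_def by blast
    next
      case 2
      show ?thesis
      proof (cases "n \<ge> N")
        case True then show ?thesis using N 2 unfolding C'_def by blast
      next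
        case False
        then have "V n \<in> C'" unfolding C'_def by simp
        then show ?thesis using V(2)[of n] 2 by blast
      qed
    qed
  qed
  moreover have "C' \<subseteq> C" using U V unfolding C'_def by blast
  moreover have "finite C'" unfolding C'_def by simp
  ultimately show "\<exists>C'. C' \<subseteq> C \<and> finite C' \<and> insert l (range f) \<subseteq> \<Union>C'" by blast
qed

lemma rescale:
  fixes y :: "nat \<Rightarrow> 'b::real_normed_vector" and c :: "nat \<Rightarrow> real"
  assumes c: "\<And>n. c n \<ge> 0" and s: "summable (\<lambda>n. c n * norm (y n))"
  shows "\<exists>\<beta>. (\<forall>n. \<beta> n \<ge> 0) \<and> (\<lambda>n. \<beta> n *\<^sub>R y n) \<longlonglongrightarrow> 0 \<and> summable (\<lambda>n. c n / \<beta> n)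
     \<and> (\<forall>n. \<beta> n = 0 \<longrightarrow> c n = 0 \<or> y n = 0)"
proof -
  define a where "a n = c n * norm (y n)" for n
  have a0: "a n \<ge> 0" for n unfolding a_def using c by simp
  have sa: "summable a" using s unfolding a_def .
  define r where "r n = (\<Sum>k. a (k + n))" for n
  have sr: "summable (\<lambda>k. a (k + n))" for n using summable_ignore_initial_segment[OF sa] .
  have r0: "r n \<ge> 0" for n unfolding r_def using suminf_nonneg[OF sr] a0 by blast
  have rstep: "r n = a n + r (Suc n)" for n
  proof -
    have "(\<Sum>k. a (Suc k + n)) = r n - a n"
      unfolding r_def using suminf_split_head[OF sr[of n]] by simp
    then show ?thesis unfolding r_def by (simp add: add.commute)
  qed
  have rlim: "r \<longlonglongrightarrow> 0"
  proof (rule LIMSEQ_I)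
    fix e :: real assume "e > 0"
    then obtain N where "\<forall>n\<ge>N. norm (\<Sum>i. a (i + n)) < e" using suminf_exist_split[OF _ sa] by blast
    then show "\<exists>N. \<forall>n\<ge>N. norm (r n - 0) < e" unfolding r_def by auto
  qed
  define u where "u n = sqrt (r n) + sqrt (r (Suc n))" for n
  have u0: "u n \<ge> 0" for n unfolding u_def using r0[of n] r0[of "Suc n"] by simp
  have ulim: "u \<longlonglongrightarrow> 0"
  proof -
    have "(\<lambda>n. sqrt (r n)) \<longlonglongrightarrow> sqrt 0" by (intro tendsto_intros rlim)
    moreover have "(\<lambda>n. sqrt (r (Suc n))) \<longlonglongrightarrow> sqrt 0" by (intro tendsto_intros LIMSEQ_Suc rlim)
    ultimately show ?thesis unfolding u_def using tendsto_add by fastforce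
  qed
  define \<beta> where "\<beta> n = (if y n \<noteq> 0 \<and> u n > 0 then u n / norm (y n) else 0)" for n
  show ?thesis
  proof (intro exI conjI allI impI)
    fix n show "\<beta> n \<ge> 0" unfolding \<beta>_def by simp
  next
    have "norm (\<beta> n *\<^sub>R y n) \<le> u n" for n unfolding \<beta>_def using u0 by auto
    then show "(\<lambda>n. \<beta> n *\<^sub>R y n) \<longlonglongrightarrow> 0"
      by (intro Lim_null_comparison[OF _ ulim]) auto
  next
    have tel: "summable (\<lambda>n. sqrt (r n) - sqrt (r (Suc n)))"
      by (rule telescope_summable'[of _ "sqrt 0"]) (intro tendsto_intros rlim)
    have "norm (c n / \<beta> n) \<le> sqrt (r n) - sqrt (r (Suc n))" for n
    proof (cases "y n \<noteq> 0 \<and> u n > 0")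
      case True
      have "c n / \<beta> n = a n / u n" unfolding \<beta>_def a_def using True by simp
      also have "a n = (sqrt (r n) - sqrt (r (Suc n))) * u n"
        using rstep[of n] r0[of n] r0[of "Suc n"] unfolding u_def
        by (simp add: algebra_simps)
      finally have "c n / \<beta> n = sqrt (r n) - sqrt (r (Suc n))" using True by simp
      moreover have "c n / \<beta> n \<ge> 0" unfolding \<beta>_def using c u0 by simp
      ultimately show ?thesis by simp
    next
      case False
      have "r (Suc n) \<le> r n" using rstep[of n] a0[of n] by simp
      then have "sqrt (r (Suc n)) \<le> sqrt (r n)" by (rule real_sqrt_le_mono)
      moreover have "\<beta> n = 0" using False unfolding \<beta>_def by auto
      ultimately show ?thesis by simp
    qed
    then show "summable (\<lambda>n. c n / \<beta> n)" by (rule summable_comparison_test'[OF tel])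
  next
    fix n assume b: "\<beta> n = 0"
    show "c n = 0 \<or> y n = 0"
    proof (cases "y n = 0")
      case False
      have "u n \<noteq> 0 \<Longrightarrow> \<beta> n \<noteq> 0" unfolding \<beta>_def using False u0[of n] by simp
      then have "u n = 0" using b by blast
      moreover have "sqrt (r n) \<ge> 0" "sqrt (r (Suc n)) \<ge> 0" using r0 by simp_all
      ultimately have "sqrt (r n) = 0" unfolding u_def by linarith
      then have "r n = 0" by simp
      then have "a n = 0" using rstep[of n] a0[of n] r0[of "Suc n"] by simp
      then show ?thesis unfolding a_def using False by simp
    qed simp
  qed
qed

lemma trace_fr_approx:
  fixes xs :: "nat \<Rightarrow> 'a::banach \<Rightarrow>\<^sub>L real" and ys :: "nat \<Rightarrow> 'a"
  assumes \<beta>0: "\<And>n. \<beta> n \<ge> 0" and \<beta>lim: "(\<lambda>n. \<beta> n *\<^sub>R ys n) \<longlonglongrightarrow> 0"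
    and \<beta>s: "summable (\<lambda>n. norm (xs n) / \<beta> n)"
    and \<beta>z: "\<And>n. \<beta> n = 0 \<Longrightarrow> norm (xs n) = 0 \<or> ys n = 0"
    and finB: "finite B" and gbl: "\<And>b. b \<in> B \<Longrightarrow> bounded_linear (g b)"
    and Frep: "\<And>z. F z = (\<Sum>b\<in>B. g b z *\<^sub>R b)"
    and Fapp: "\<And>n. norm (F (\<beta> n *\<^sub>R ys n) - \<beta> n *\<^sub>R ys n) \<le> \<epsilon>"
  shows "\<bar>(\<Sum>n. xs n (ys n)) - (\<Sum>b\<in>B. g b (\<Sum>n. xs n b *\<^sub>R ys n))\<bar> \<le> \<epsilon> * (\<Sum>n. norm (xs n) / \<beta> n)"
proof -
  define p where "p n = inverse (\<beta> n) *\<^sub>R xs n" for n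
  define q where "q n = \<beta> n *\<^sub>R ys n" for n
  have pq: "blinfun_apply (xs n) v *\<^sub>R ys n = blinfun_apply (p n) v *\<^sub>R q n" for n v
  proof (cases "\<beta> n = 0")
    case True then show ?thesis using \<beta>z[OF True] unfolding p_def q_def by auto
  next
    case False then show ?thesis unfolding p_def q_def by (simp add: blinfun.scaleR_left)
  qed
  have pq2: "blinfun_apply (xs n) (ys n) = blinfun_apply (p n) (q n)" for n
  proof (cases "\<beta> n = 0")
    case True then show ?thesis using \<beta>z[OF True] unfolding p_def q_def by auto
  next
    case False then show ?thesis unfolding p_def q_def by (simp add: blinfun.scaleR_right blinfun.scaleR_left)
  qed
  have np: "norm (p n) = norm (xs n) / \<beta> n" for n
    unfolding p_def using \<beta>0[of n] by (simp add: divide_inverse_commute)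
  have sp: "summable (\<lambda>n. norm (p n))" using \<beta>s np by simp
  have "Bseq q" unfolding q_def by (rule Cauchy_Bseq[OF LIMSEQ_imp_Cauchy[OF \<beta>lim]])
  then obtain Q where Q: "Q > 0" "\<And>n. norm (q n) \<le> Q" by (metis BseqE)
  have dom: "summable f" if "\<And>n. norm (f n) \<le> K * norm (p n)" for f :: "nat \<Rightarrow> real" and K
    by (rule summable_comparison_test'[OF summable_mult[OF sp, of K]]) (use that in auto)
  have s1: "summable (\<lambda>n. blinfun_apply (p n) (q n))"
  proof (rule dom[where K=Q])
    fix n
    have "norm (blinfun_apply (p n) (q n)) \<le> norm (p n) * norm (q n)" by (rule norm_blinfun)
    also have "\<dots> \<le> norm (p n) * Q" using Q(2)[of n] by (intro mult_left_mono) auto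
    finally show "norm (blinfun_apply (p n) (q n)) \<le> Q * norm (p n)" by (simp add: mult.commute)
  qed
  have nF: "norm (F z) \<le> norm z + \<epsilon>" if "norm (F z - z) \<le> \<epsilon>" for z
    using norm_triangle_ineq2[of "F z" z] that by simp
  have s2: "summable (\<lambda>n. blinfun_apply (p n) (F (q n)))"
  proof (rule dom[where K="Q + \<epsilon>"])
    fix n
    have "norm (blinfun_apply (p n) (F (q n))) \<le> norm (p n) * norm (F (q n))" by (rule norm_blinfun)
    also have "\<dots> \<le> norm (p n) * (Q + \<epsilon>)"
      using nF[OF Fapp[of n, folded q_def]] Q(2)[of n] by (intro mult_left_mono) auto
    finally show "norm (blinfun_apply (p n) (F (q n))) \<le> (Q + \<epsilon>) * norm (p n)" by (simp add: mult.commute)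
  qed
  have sb: "summable (\<lambda>n. blinfun_apply (p n) b *\<^sub>R q n)" for b
  proof (rule summable_comparison_test'[OF summable_mult[OF sp, of "norm b * Q"]])
    fix n
    have "norm (blinfun_apply (p n) b *\<^sub>R q n) = norm (blinfun_apply (p n) b) * norm (q n)" by simp
    also have "\<dots> \<le> (norm (p n) * norm b) * Q"
      using Q(2)[of n] norm_blinfun[of "p n" b] by (intro mult_mono) auto
    finally show "norm (blinfun_apply (p n) b *\<^sub>R q n) \<le> norm b * Q * norm (p n)" by (simp add: ac_simps)
  qed
  have Z: "(\<Sum>b\<in>B. g b (\<Sum>n. xs n b *\<^sub>R ys n)) = (\<Sum>n. blinfun_apply (p n) (F (q n)))"
  proof -
    have "(\<Sum>b\<in>B. g b (\<Sum>n. xs n b *\<^sub>R ys n)) = (\<Sum>b\<in>B. g b (\<Sum>n. p n b *\<^sub>R q n))"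
      by (simp add: pq)
    also have "\<dots> = (\<Sum>b\<in>B. \<Sum>n. p n b * g b (q n))"
    proof (rule sum.cong[OF refl])
      fix b assume b: "b \<in> B"
      interpret gb: bounded_linear "g b" using gbl[OF b] .
      show "g b (\<Sum>n. p n b *\<^sub>R q n) = (\<Sum>n. p n b * g b (q n))"
        using gb.suminf[OF sb[of b]] by (simp add: gb.scaleR)
    qed
    also have "\<dots> = (\<Sum>n. \<Sum>b\<in>B. p n b * g b (q n))"
    proof (rule suminf_sum[symmetric])
      fix b assume b: "b \<in> B"
      interpret gb: bounded_linear "g b" using gbl[OF b] .
      have "summable (\<lambda>n. g b (p n b *\<^sub>R q n))" by (rule gb.summable[OF sb[of b]])
      then show "summable (\<lambda>n. p n b * g b (q n))" by (simp add: gb.scaleR)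
    qed
    also have "\<dots> = (\<Sum>n. blinfun_apply (p n) (F (q n)))"
      by (simp add: Frep blinfun.sum_right blinfun.scaleR_right mult.commute)
    finally show ?thesis .
  qed
  have "(\<Sum>n. xs n (ys n)) = (\<Sum>n. blinfun_apply (p n) (q n))" by (simp add: pq2)
  then have "(\<Sum>n. xs n (ys n)) - (\<Sum>b\<in>B. g b (\<Sum>n. xs n b *\<^sub>R ys n))
      = (\<Sum>n. blinfun_apply (p n) (q n) - blinfun_apply (p n) (F (q n)))"
    using Z suminf_diff[OF s1 s2] by simp
  also have "\<bar>\<dots>\<bar> \<le> (\<Sum>n. \<epsilon> * norm (p n))"
  proof -
    have b: "\<bar>blinfun_apply (p n) (q n) - blinfun_apply (p n) (F (q n))\<bar> \<le> \<epsilon> * norm (p n)" for n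
    proof -
      have "\<bar>blinfun_apply (p n) (q n) - blinfun_apply (p n) (F (q n))\<bar> = norm (blinfun_apply (p n) (F (q n) - q n))"
        by (simp add: blinfun.diff_right)
      also have "\<dots> \<le> norm (p n) * norm (F (q n) - q n)" by (rule norm_blinfun)
      also have "\<dots> \<le> norm (p n) * \<epsilon>" using Fapp[of n, folded q_def] by (intro mult_left_mono) auto
      finally show ?thesis by (simp add: mult.commute)
    qed
    have sm: "summable (\<lambda>n. \<epsilon> * norm (p n))" using summable_mult[OF sp] .
    have "summable (\<lambda>n. \<bar>blinfun_apply (p n) (q n) - blinfun_apply (p n) (F (q n))\<bar>)"
      by (rule summable_comparison_test'[OF sm]) (use b in auto)
    then have "\<bar>\<Sum>n. blinfun_apply (p n) (q n) - blinfun_apply (p n) (F (q n))\<bar>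
        \<le> (\<Sum>n. \<bar>blinfun_apply (p n) (q n) - blinfun_apply (p n) (F (q n))\<bar>)" by (rule summable_rabs)
    also have "\<dots> \<le> (\<Sum>n. \<epsilon> * norm (p n))" by (rule suminf_le[OF b]) (fact, fact sm)
    finally show ?thesis .
  qed
  also have "\<dots> = \<epsilon> * (\<Sum>n. norm (xs n) / \<beta> n)" using suminf_mult[OF sp, of \<epsilon>] np by simp
  finally show ?thesis .
qed

lemma zero_by_eps:
  fixes d C :: real
  assumes C: "C \<ge> 0" and h: "\<And>\<epsilon>. \<epsilon> > 0 \<Longrightarrow> \<bar>d\<bar> \<le> \<epsilon> * C"
  shows "d = 0"
proof (rule ccontr)
  assume "d \<noteq> 0"
  then have dp: "\<bar>d\<bar> > 0" by simp
  define \<epsilon> where "\<epsilon> = \<bar>d\<bar> / (C + 1)"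
  have ep: "\<epsilon> > 0" unfolding \<epsilon>_def using dp C by simp
  have "\<epsilon> * C < \<epsilon> * (C + 1)" using ep by simp
  also have "\<epsilon> * (C + 1) = \<bar>d\<bar>" unfolding \<epsilon>_def using C by simp
  finally show False using h[OF ep] by simp
qed

lemma trace_indep:
  fixes xs xs' :: "nat \<Rightarrow> 'a::banach \<Rightarrow>\<^sub>L real" and ys ys' :: "nat \<Rightarrow> 'a"
  assumes AP: "approximation_property TYPE('a)"
    and s1: "summable (\<lambda>n. norm (xs n) * norm (ys n))"
    and s2: "summable (\<lambda>n. norm (xs' n) * norm (ys' n))"
    and eq: "\<And>x. (\<Sum>n. xs n x *\<^sub>R ys n) = (\<Sum>n. xs' n x *\<^sub>R ys' n)"
  shows "(\<Sum>n. xs n (ys n)) = (\<Sum>n. xs' n (ys' n))"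
proof -
  obtain \<beta> where \<beta>: "\<forall>n. \<beta> n \<ge> 0" "(\<lambda>n. \<beta> n *\<^sub>R ys n) \<longlonglongrightarrow> 0"
      "summable (\<lambda>n. norm (xs n) / \<beta> n)" "\<forall>n. \<beta> n = 0 \<longrightarrow> norm (xs n) = 0 \<or> ys n = 0"
    using rescale[of "\<lambda>n. norm (xs n)" ys] s1 by auto
  obtain \<beta>' where \<beta>': "\<forall>n. \<beta>' n \<ge> 0" "(\<lambda>n. \<beta>' n *\<^sub>R ys' n) \<longlonglongrightarrow> 0"
      "summable (\<lambda>n. norm (xs' n) / \<beta>' n)" "\<forall>n. \<beta>' n = 0 \<longrightarrow> norm (xs' n) = 0 \<or> ys' n = 0"
    using rescale[of "\<lambda>n. norm (xs' n)" ys'] s2 by auto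
  define K where "K = insert 0 (range (\<lambda>n. \<beta> n *\<^sub>R ys n)) \<union> insert 0 (range (\<lambda>n. \<beta>' n *\<^sub>R ys' n))"
  have cK: "compact K" unfolding K_def
    by (intro compact_Un compact_conv_seq \<beta>(2) \<beta>'(2))
  define A where "A = (\<Sum>n. norm (xs n) / \<beta> n)"
  define A' where "A' = (\<Sum>n. norm (xs' n) / \<beta>' n)"
  have A0: "A \<ge> 0" unfolding A_def using \<beta>(1) by (intro suminf_nonneg[OF \<beta>(3)]) auto
  have A0': "A' \<ge> 0" unfolding A'_def using \<beta>'(1) by (intro suminf_nonneg[OF \<beta>'(3)]) auto
  show ?thesis
  proof (rule zero_by_eps[where C="A + A'", THEN eq_iff_diff_eq_0[THEN iffD2]])
    show "A + A' \<ge> 0" using A0 A0' by simp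
  next
    fix \<epsilon> :: real assume ep: "\<epsilon> > 0"
    obtain F where F: "finite_rank F" "\<forall>x\<in>K. norm (blinfun_apply F x - x) \<le> \<epsilon>"
      using AP ep cK unfolding approximation_property_def by blast
    obtain B g where Bg: "finite B" "\<forall>b\<in>B. bounded_linear (g b)" "\<forall>x. blinfun_apply F x = (\<Sum>b\<in>B. g b x *\<^sub>R b)"
      using finite_rank_decomp[OF F(1)] by blast
    have a1: "\<bar>(\<Sum>n. xs n (ys n)) - (\<Sum>b\<in>B. g b (\<Sum>n. xs n b *\<^sub>R ys n))\<bar> \<le> \<epsilon> * A"
      unfolding A_def
      by (rule trace_fr_approx[where F="blinfun_apply F"]) (use \<beta> Bg F(2) K_def in auto)
    have a2: "\<bar>(\<Sum>n. xs' n (ys' n)) - (\<Sum>b\<in>B. g b (\<Sum>n. xs' n b *\<^sub>R ys' n))\<bar> \<le> \<epsilon> * A'"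
      unfolding A'_def
      by (rule trace_fr_approx[where F="blinfun_apply F"]) (use \<beta>' Bg F(2) K_def in auto)
    have "(\<Sum>b\<in>B. g b (\<Sum>n. xs n b *\<^sub>R ys n)) = (\<Sum>b\<in>B. g b (\<Sum>n. xs' n b *\<^sub>R ys' n))"
      using eq by simp
    then show "\<bar>(\<Sum>n. xs n (ys n)) - (\<Sum>n. xs' n (ys' n))\<bar> \<le> \<epsilon> * (A + A')"
      using a1 a2 by (simp add: distrib_left abs_diff_le_iff)
  qed
qed

lemma il_sums:
  fixes F G :: "nat \<Rightarrow> 'b::real_normed_vector"
  assumes "F sums s" "G sums t"
  shows "(\<lambda>n. if even n then F (n div 2) else G (n div 2)) sums (s + t)"
proof -
  define h1 where "h1 n = (if even n then F (n div 2) else 0)" for n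
  define h2 where "h2 n = (if even n then 0 else G (n div 2))" for n
  have "(\<lambda>n. h1 (2 * n)) sums s" unfolding h1_def using assms(1) by simp
  moreover have "strict_mono (\<lambda>n::nat. 2 * n)" by (rule strict_monoI) simp
  moreover have "h1 n = 0" if "n \<notin> range (\<lambda>n::nat. 2 * n)" for n
    using that unfolding h1_def by (auto elim!: evenE)
  ultimately have 1: "h1 sums s" using sums_mono_reindex[of "\<lambda>n::nat. 2 * n" h1 s] by blast
  have "(\<lambda>n. h2 (2 * n + 1)) sums t" unfolding h2_def using assms(2) by simp
  moreover have "strict_mono (\<lambda>n::nat. 2 * n + 1)" by (rule strict_monoI) simp
  moreover have "h2 n = 0" if "n \<notin> range (\<lambda>n::nat. 2 * n + 1)" for n
    using that unfolding h2_def by (auto elim!: oddE)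
  ultimately have 2: "h2 sums t" using sums_mono_reindex[of "\<lambda>n::nat. 2 * n + 1" h2 t] by blast
  have "(\<lambda>n. h1 n + h2 n) sums (s + t)" using sums_add[OF 1 2] .
  moreover have "(\<lambda>n. h1 n + h2 n) = (\<lambda>n. if even n then F (n div 2) else G (n div 2))"
    unfolding h1_def h2_def by auto
  ultimately show ?thesis by simp
qed

lemma il_summable:
  fixes F G :: "nat \<Rightarrow> 'b::real_normed_vector"
  assumes "summable F" "summable G"
  shows "summable (\<lambda>n. if even n then F (n div 2) else G (n div 2))"
    and "(\<Sum>n. if even n then F (n div 2) else G (n div 2)) = suminf F + suminf G"
  using il_sums[OF summable_sums[OF assms(1)] summable_sums[OF assms(2)]]
  by (auto simp: sums_iff)

lemma nuc_summable_apply: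
  fixes xs :: "nat \<Rightarrow> 'a::real_normed_vector \<Rightarrow>\<^sub>L real" and ys :: "nat \<Rightarrow> 'b::banach"
  assumes s: "summable (\<lambda>n. norm (xs n) * norm (ys n))"
  shows "summable (\<lambda>n. norm (blinfun_apply (xs n) x *\<^sub>R ys n))"
    and "summable (\<lambda>n. blinfun_apply (xs n) x *\<^sub>R ys n)"
    and "norm (\<Sum>n. blinfun_apply (xs n) x *\<^sub>R ys n) \<le> (\<Sum>n. norm (xs n) * norm (ys n)) * norm x"
proof -
  have b: "norm (blinfun_apply (xs n) x *\<^sub>R ys n) \<le> norm x * (norm (xs n) * norm (ys n))" for n
  proof -
    have "norm (blinfun_apply (xs n) x *\<^sub>R ys n) = norm (blinfun_apply (xs n) x) * norm (ys n)" by simp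
    also have "\<dots> \<le> (norm (xs n) * norm x) * norm (ys n)" by (intro mult_right_mono norm_blinfun) auto
    finally show ?thesis by (simp add: ac_simps)
  qed
  show s1: "summable (\<lambda>n. norm (blinfun_apply (xs n) x *\<^sub>R ys n))"
    by (rule summable_comparison_test'[OF summable_mult[OF s, of "norm x"]]) (use b in auto)
  show "summable (\<lambda>n. blinfun_apply (xs n) x *\<^sub>R ys n)" by (rule summable_norm_cancel[OF s1])
  have "norm (\<Sum>n. blinfun_apply (xs n) x *\<^sub>R ys n) \<le> (\<Sum>n. norm (blinfun_apply (xs n) x *\<^sub>R ys n))"
    by (rule summable_norm[OF s1])
  also have "\<dots> \<le> (\<Sum>n. norm x * (norm (xs n) * norm (ys n)))"
    by (rule suminf_le[OF b s1 summable_mult[OF s]])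
  also have "\<dots> = (\<Sum>n. norm (xs n) * norm (ys n)) * norm x"
    using suminf_mult[OF s, of "norm x"] by (simp add: mult.commute)
  finally show "norm (\<Sum>n. blinfun_apply (xs n) x *\<^sub>R ys n) \<le> (\<Sum>n. norm (xs n) * norm (ys n)) * norm x" .
qed

lemma nuc_bounded_linear:
  fixes xs :: "nat \<Rightarrow> 'a::real_normed_vector \<Rightarrow>\<^sub>L real" and ys :: "nat \<Rightarrow> 'b::banach"
  assumes s: "summable (\<lambda>n. norm (xs n) * norm (ys n))"
  shows "bounded_linear (\<lambda>x. \<Sum>n. blinfun_apply (xs n) x *\<^sub>R ys n)"
proof (rule bounded_linear_intro[of _ "\<Sum>n. norm (xs n) * norm (ys n)"])
  fix x y
  show "(\<Sum>n. blinfun_apply (xs n) (x + y) *\<^sub>R ys n) = (\<Sum>n. blinfun_apply (xs n) x *\<^sub>R ys n) + (\<Sum>n. blinfun_apply (xs n) y *\<^sub>R ys n)"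
    using suminf_add[OF nuc_summable_apply(2)[OF s, of x] nuc_summable_apply(2)[OF s, of y]]
    by (simp add: blinfun.add_right scaleR_add_left)
next
  fix r x
  show "(\<Sum>n. blinfun_apply (xs n) (r *\<^sub>R x) *\<^sub>R ys n) = r *\<^sub>R (\<Sum>n. blinfun_apply (xs n) x *\<^sub>R ys n)"
    using suminf_scaleR_right[OF nuc_summable_apply(2)[OF s, of x], of r]
    by (simp add: blinfun.scaleR_right)
next
  fix x show "norm (\<Sum>n. blinfun_apply (xs n) x *\<^sub>R ys n) \<le> norm x * (\<Sum>n. norm (xs n) * norm (ys n))"
    using nuc_summable_apply(3)[OF s, of x] by (simp add: mult.commute)
qed

definition nucop :: "(nat \<Rightarrow> ('a::banach \<Rightarrow>\<^sub>L real)) \<Rightarrow> (nat \<Rightarrow> 'a) \<Rightarrow> ('a \<Rightarrow>\<^sub>L 'a)" where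
  "nucop xs ys = Blinfun (\<lambda>x. \<Sum>n. blinfun_apply (xs n) x *\<^sub>R ys n)"

lemma nucop_rep:
  assumes "summable (\<lambda>n. norm (xs n) * norm (ys n))"
  shows "nuclear_rep (nucop xs ys) xs ys"
  unfolding nuclear_rep_def nucop_def
  using assms bounded_linear_Blinfun_apply[OF nuc_bounded_linear[OF assms]] by simp

lemma nuclear_rep_summable: "nuclear_rep T xs ys \<Longrightarrow> summable (\<lambda>n. norm (xs n) * norm (ys n))"
  unfolding nuclear_rep_def by blast

lemma nuclear_rep_apply: "nuclear_rep T xs ys \<Longrightarrow> blinfun_apply T x = (\<Sum>n. blinfun_apply (xs n) x *\<^sub>R ys n)"
  unfolding nuclear_rep_def by blast

lemma nuclear_norm_le:
  assumes "nuclear_rep T xs ys"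
  shows "nuclear_norm T \<le> (\<Sum>n. norm (xs n) * norm (ys n))"
  unfolding nuclear_norm_def
proof (rule cInf_lower)
  show "(\<Sum>n. norm (xs n) * norm (ys n)) \<in> {\<Sum>n. norm (xs n) * norm (ys n) |xs ys. nuclear_rep T xs ys}"
    using assms by blast
  show "bdd_below {\<Sum>n. norm (xs n) * norm (ys n) |xs ys. nuclear_rep T xs ys}"
    unfolding bdd_below_def
    by (rule exI[of _ 0]) (auto intro!: suminf_nonneg dest: nuclear_rep_summable)
qed

lemma nuclear_norm_ge:
  assumes T: "T \<in> nuclear_ops" and K: "K \<ge> 0"
    and h: "\<And>xs ys. nuclear_rep T xs ys \<Longrightarrow> c \<le> K * (\<Sum>n. norm (xs n) * norm (ys n))"
  shows "c \<le> K * nuclear_norm T"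
proof (cases "K = 0")
  case True
  obtain xs ys where "nuclear_rep T xs ys" using T unfolding nuclear_ops_def by blast
  then show ?thesis using h True by fastforce
next
  case False
  then have Kp: "K > 0" using K by simp
  have "c / K \<le> nuclear_norm T"
    unfolding nuclear_norm_def
  proof (rule cInf_greatest)
    show "{\<Sum>n. norm (xs n) * norm (ys n) |xs ys. nuclear_rep T xs ys} \<noteq> {}"
      using T unfolding nuclear_ops_def by blast
  next
    fix v assume "v \<in> {\<Sum>n. norm (xs n) * norm (ys n) |xs ys. nuclear_rep T xs ys}"
    then obtain xs ys where "nuclear_rep T xs ys" "v = (\<Sum>n. norm (xs n) * norm (ys n))" by blast
    then show "c / K \<le> v" using h Kp by (simp add: divide_le_eq mult.commute)
  qed
  then show ?thesis using Kp by (simp add: divide_le_eq mult.commute)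
qed

lemma nuclear_norm_nonneg:
  assumes "T \<in> nuclear_ops" shows "nuclear_norm T \<ge> 0"
proof -
  have "0 \<le> 1 * nuclear_norm T"
    by (rule nuclear_norm_ge[OF assms]) (auto intro!: suminf_nonneg dest: nuclear_rep_summable)
  then show ?thesis by simp
qed

definition nrep :: "('a::banach \<Rightarrow>\<^sub>L 'a) \<Rightarrow> (nat \<Rightarrow> ('a \<Rightarrow>\<^sub>L real)) \<times> (nat \<Rightarrow> 'a)" where
  "nrep T = (SOME p. nuclear_rep T (fst p) (snd p))"

definition trv :: "('a::banach \<Rightarrow>\<^sub>L 'a) \<Rightarrow> ('a \<Rightarrow>\<^sub>L 'a) \<Rightarrow> real" where
  "trv V T = (\<Sum>n. blinfun_apply (fst (nrep T) n) (blinfun_apply V (snd (nrep T) n)))"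

lemma nuclear_rep_comp:
  fixes V :: "'a::banach \<Rightarrow>\<^sub>L 'a"
  assumes r: "nuclear_rep T xs ys"
  shows "summable (\<lambda>n. norm (xs n) * norm (blinfun_apply V (ys n)))"
    and "\<And>x. (\<Sum>n. blinfun_apply (xs n) x *\<^sub>R blinfun_apply V (ys n)) = blinfun_apply V (blinfun_apply T x)"
proof -
  have s: "summable (\<lambda>n. norm (xs n) * norm (ys n))" using nuclear_rep_summable[OF r] .
  show "summable (\<lambda>n. norm (xs n) * norm (blinfun_apply V (ys n)))"
  proof (rule summable_comparison_test'[OF summable_mult[OF s, of "norm V"]])
    fix n
    have "norm (xs n) * norm (blinfun_apply V (ys n)) \<le> norm (xs n) * (norm V * norm (ys n))"
      by (intro mult_left_mono norm_blinfun) auto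
    then show "norm (norm (xs n) * norm (blinfun_apply V (ys n))) \<le> norm V * (norm (xs n) * norm (ys n))"
      by (simp add: ac_simps)
  qed
  fix x
  have "blinfun_apply V (blinfun_apply T x) = blinfun_apply V (\<Sum>n. blinfun_apply (xs n) x *\<^sub>R ys n)"
    using nuclear_rep_apply[OF r] by simp
  also have "\<dots> = (\<Sum>n. blinfun_apply V (blinfun_apply (xs n) x *\<^sub>R ys n))"
    by (rule bounded_linear.suminf[OF blinfun.bounded_linear_right nuc_summable_apply(2)[OF s]])
  finally show "(\<Sum>n. blinfun_apply (xs n) x *\<^sub>R blinfun_apply V (ys n)) = blinfun_apply V (blinfun_apply T x)"
    by (simp add: blinfun.scaleR_right)
qed

lemma trv_rep:
  fixes T V :: "'a::banach \<Rightarrow>\<^sub>L 'a"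
  assumes AP: "approximation_property TYPE('a)" and r: "nuclear_rep T xs ys"
  shows "trv V T = (\<Sum>n. blinfun_apply (xs n) (blinfun_apply V (ys n)))"
proof -
  have "\<exists>p. nuclear_rep T (fst p) (snd p)" using r by (intro exI[of _ "(xs, ys)"]) simp
  then have r0: "nuclear_rep T (fst (nrep T)) (snd (nrep T))" unfolding nrep_def by (rule someI_ex)
  show ?thesis unfolding trv_def
    by (rule trace_indep[OF AP nuclear_rep_comp(1)[OF r0] nuclear_rep_comp(1)[OF r]])
       (simp add: nuclear_rep_comp(2)[OF r0] nuclear_rep_comp(2)[OF r])
qed

lemma nuc_tr_summable:
  fixes V :: "'a::banach \<Rightarrow>\<^sub>L 'a"
  assumes r: "nuclear_rep T xs ys"
  shows "summable (\<lambda>n. norm (blinfun_apply (xs n) (blinfun_apply V (ys n))))"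
    and "summable (\<lambda>n. blinfun_apply (xs n) (blinfun_apply V (ys n)))"
proof -
  have s: "summable (\<lambda>n. norm (xs n) * norm (ys n))" using nuclear_rep_summable[OF r] .
  have b: "norm (blinfun_apply (xs n) (blinfun_apply V (ys n))) \<le> norm V * (norm (xs n) * norm (ys n))" for n
  proof -
    have "norm (blinfun_apply (xs n) (blinfun_apply V (ys n))) \<le> norm (xs n) * norm (blinfun_apply V (ys n))"
      by (rule norm_blinfun)
    also have "\<dots> \<le> norm (xs n) * (norm V * norm (ys n))" by (intro mult_left_mono norm_blinfun) auto
    finally show ?thesis by (simp add: ac_simps)
  qed
  show s1: "summable (\<lambda>n. norm (blinfun_apply (xs n) (blinfun_apply V (ys n))))"
    by (rule summable_comparison_test'[OF summable_mult[OF s, of "norm V"]]) (use b in auto)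
  show "summable (\<lambda>n. blinfun_apply (xs n) (blinfun_apply V (ys n)))" by (rule summable_norm_cancel[OF s1])
qed

lemma trv_bound_rep:
  fixes T V :: "'a::banach \<Rightarrow>\<^sub>L 'a"
  assumes AP: "approximation_property TYPE('a)" and r: "nuclear_rep T xs ys"
  shows "\<bar>trv V T\<bar> \<le> norm V * (\<Sum>n. norm (xs n) * norm (ys n))"
proof -
  have s: "summable (\<lambda>n. norm (xs n) * norm (ys n))" using nuclear_rep_summable[OF r] .
  have b: "norm (blinfun_apply (xs n) (blinfun_apply V (ys n))) \<le> norm V * (norm (xs n) * norm (ys n))" for n
  proof -
    have "norm (blinfun_apply (xs n) (blinfun_apply V (ys n))) \<le> norm (xs n) * norm (blinfun_apply V (ys n))"
      by (rule norm_blinfun)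
    also have "\<dots> \<le> norm (xs n) * (norm V * norm (ys n))" by (intro mult_left_mono norm_blinfun) auto
    finally show ?thesis by (simp add: ac_simps)
  qed
  have s1: "summable (\<lambda>n. norm (blinfun_apply (xs n) (blinfun_apply V (ys n))))"
    by (rule summable_comparison_test'[OF summable_mult[OF s, of "norm V"]]) (use b in auto)
  have "\<bar>trv V T\<bar> = norm (\<Sum>n. blinfun_apply (xs n) (blinfun_apply V (ys n)))"
    using trv_rep[OF AP r] by simp
  also have "\<dots> \<le> (\<Sum>n. norm (blinfun_apply (xs n) (blinfun_apply V (ys n))))" by (rule summable_norm[OF s1])
  also have "\<dots> \<le> (\<Sum>n. norm V * (norm (xs n) * norm (ys n)))" by (rule suminf_le[OF b s1 summable_mult[OF s]])
  also have "\<dots> = norm V * (\<Sum>n. norm (xs n) * norm (ys n))" by (rule suminf_mult[OF s])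
  finally show ?thesis .
qed

lemma nuclear_rep_lincomb:
  fixes S T :: "'a::banach \<Rightarrow>\<^sub>L 'a" and a b :: real
  assumes r1: "nuclear_rep S xs ys" and r2: "nuclear_rep T xs' ys'"
  defines "zs \<equiv> (\<lambda>n. if even n then a *\<^sub>R xs (n div 2) else b *\<^sub>R xs' (n div 2))"
    and "ws \<equiv> (\<lambda>n. if even n then ys (n div 2) else ys' (n div 2))"
  shows "nuclear_rep (a *\<^sub>R S + b *\<^sub>R T) zs ws"
proof -
  have s1: "summable (\<lambda>n. norm (xs n) * norm (ys n))" using nuclear_rep_summable[OF r1] .
  have s2: "summable (\<lambda>n. norm (xs' n) * norm (ys' n))" using nuclear_rep_summable[OF r2] .
  have e: "(\<lambda>n. norm (zs n) * norm (ws n)) = (\<lambda>n. if even n then \<bar>a\<bar> * (norm (xs (n div 2)) * norm (ys (n div 2)))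
      else \<bar>b\<bar> * (norm (xs' (n div 2)) * norm (ys' (n div 2))))"
    unfolding zs_def ws_def by auto
  have "summable (\<lambda>n. norm (zs n) * norm (ws n))"
    unfolding e by (intro il_summable summable_mult s1 s2)
  moreover have "blinfun_apply (a *\<^sub>R S + b *\<^sub>R T) x = (\<Sum>n. blinfun_apply (zs n) x *\<^sub>R ws n)" for x
  proof -
    have e2: "(\<lambda>n. blinfun_apply (zs n) x *\<^sub>R ws n) = (\<lambda>n. if even n then a *\<^sub>R (blinfun_apply (xs (n div 2)) x *\<^sub>R ys (n div 2))
      else b *\<^sub>R (blinfun_apply (xs' (n div 2)) x *\<^sub>R ys' (n div 2)))"
      unfolding zs_def ws_def by (auto simp: blinfun.scaleR_left)
    have "(\<Sum>n. blinfun_apply (zs n) x *\<^sub>R ws n) = (\<Sum>n. a *\<^sub>R (blinfun_apply (xs n) x *\<^sub>R ys n)) + (\<Sum>n. b *\<^sub>R (blinfun_apply (xs' n) x *\<^sub>R ys' n))"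
      unfolding e2 by (intro il_summable summable_scaleR_right nuc_summable_apply(2) s1 s2)
    also have "\<dots> = a *\<^sub>R blinfun_apply S x + b *\<^sub>R blinfun_apply T x"
      using suminf_scaleR_right[OF nuc_summable_apply(2)[OF s1, of x], of a]
        suminf_scaleR_right[OF nuc_summable_apply(2)[OF s2, of x], of b]
        nuclear_rep_apply[OF r1, of x] nuclear_rep_apply[OF r2, of x] by simp
    finally show ?thesis by (simp add: blinfun.add_left blinfun.scaleR_left)
  qed
  ultimately show ?thesis unfolding nuclear_rep_def by blast
qed

lemma nuclear_ops_lincomb:
  "S \<in> nuclear_ops \<Longrightarrow> T \<in> nuclear_ops \<Longrightarrow> a *\<^sub>R S + b *\<^sub>R T \<in> nuclear_ops"
  unfolding nuclear_ops_def using nuclear_rep_lincomb by blast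

lemma trv_lincomb:
  fixes S T V :: "'a::banach \<Rightarrow>\<^sub>L 'a"
  assumes AP: "approximation_property TYPE('a)" and S: "S \<in> nuclear_ops" and T: "T \<in> nuclear_ops"
  shows "trv V (a *\<^sub>R S + b *\<^sub>R T) = a * trv V S + b * trv V T"
proof -
  obtain xs ys where r1: "nuclear_rep S xs ys" using S unfolding nuclear_ops_def by blast
  obtain xs' ys' where r2: "nuclear_rep T xs' ys'" using T unfolding nuclear_ops_def by blast
  have s1: "summable (\<lambda>n. blinfun_apply (xs n) (blinfun_apply V (ys n)))"
    by (rule nuc_tr_summable(2)[OF r1])
  have s2: "summable (\<lambda>n. blinfun_apply (xs' n) (blinfun_apply V (ys' n)))"
    by (rule nuc_tr_summable(2)[OF r2])
  define zs where "zs = (\<lambda>n. if even n then a *\<^sub>R xs (n div 2) else b *\<^sub>R xs' (n div 2))"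
  define ws where "ws = (\<lambda>n. if even n then ys (n div 2) else ys' (n div 2))"
  have r: "nuclear_rep (a *\<^sub>R S + b *\<^sub>R T) zs ws"
    unfolding zs_def ws_def by (rule nuclear_rep_lincomb[OF r1 r2])
  have e: "(\<lambda>n. blinfun_apply (zs n) (blinfun_apply V (ws n))) = (\<lambda>n. if even n then a * blinfun_apply (xs (n div 2)) (blinfun_apply V (ys (n div 2)))
      else b * blinfun_apply (xs' (n div 2)) (blinfun_apply V (ys' (n div 2))))"
    unfolding zs_def ws_def by (auto simp: blinfun.scaleR_left)
  show ?thesis
    unfolding trv_rep[OF AP r] trv_rep[OF AP r1] trv_rep[OF AP r2] e
    using il_summable(2)[OF summable_mult[OF s1, of a] summable_mult[OF s2, of b]]
      suminf_mult[OF s1, of a] suminf_mult[OF s2, of b] by simp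
qed

lemma tail_small:
  fixes g :: "nat \<Rightarrow> real"
  assumes s: "summable (\<lambda>j. \<bar>g j\<bar>)" and e: "e > 0"
  shows "\<exists>N. \<forall>F. finite F \<longrightarrow> F \<subseteq> {N..} \<longrightarrow> (\<Sum>j\<in>F. \<bar>g j\<bar>) \<le> e"
proof -
  obtain N where N: "\<forall>n\<ge>N. norm (\<Sum>i. \<bar>g (i + n)\<bar>) < e" using suminf_exist_split[OF e s] by blast
  have sN: "summable (\<lambda>i. \<bar>g (i + N)\<bar>)" using summable_ignore_initial_segment[OF s] .
  show ?thesis
  proof (intro exI allI impI)
    fix F :: "nat set" assume F: "finite F" "F \<subseteq> {N..}"
    define G where "G = (\<lambda>j. j - N) ` F"
    have inj: "inj_on (\<lambda>i. i + N) G" by (rule inj_onI) simp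
    have FG: "F = (\<lambda>i. i + N) ` G" unfolding G_def using F(2) by (force simp: image_iff)
    have "(\<Sum>j\<in>F. \<bar>g j\<bar>) = (\<Sum>i\<in>G. \<bar>g (i + N)\<bar>)" unfolding FG by (simp add: sum.reindex[OF inj])
    also have "\<dots> \<le> (\<Sum>i. \<bar>g (i + N)\<bar>)" by (rule sum_le_suminf[OF sN]) (use F G_def in auto)
    also have "\<dots> \<le> e" using N[rule_format, of N] by simp
    finally show "(\<Sum>j\<in>F. \<bar>g j\<bar>) \<le> e" .
  qed
qed

lemma geom_half_le: "(\<Sum>l<i. (1/2::real) ^ Suc l) \<le> 1"
proof -
  have "(\<Sum>l<i. (1/2::real) ^ Suc l) = 1 - (1/2) ^ i" by (induction i) (auto simp: field_simps)
  then show ?thesis by simp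
qed

fun stp :: "nat \<Rightarrow> (nat \<Rightarrow> nat \<Rightarrow> nat) \<Rightarrow> nat \<Rightarrow> nat \<times> nat" where
  "stp N G 0 = (N, N)"
| "stp N G (Suc i) = (max (Suc (fst (stp N G i))) (max (snd (stp N G i)) (G (fst (stp N G i)) i)),
                      max (snd (stp N G i)) (G (fst (stp N G i)) i))"

lemma stp_props:
  fixes N :: nat and G :: "nat \<Rightarrow> nat \<Rightarrow> nat"
  defines "k \<equiv> (\<lambda>i. fst (stp N G i))" and "B \<equiv> (\<lambda>i. snd (stp N G i))"
  shows "strict_mono k" "k 0 = N" "\<And>l i. l < i \<Longrightarrow> G (k l) l \<le> k i"
proof -
  have ks: "k i < k (Suc i)" for i unfolding k_def by simp
  show "strict_mono k" using ks by (rule strict_monoI_Suc)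
  show "k 0 = N" unfolding k_def by simp
  have Bm: "incseq B" unfolding B_def by (rule incseq_SucI) simp
  have kB: "B i \<le> k i" for i unfolding k_def B_def by (cases i) auto
  have GB: "G (k l) l \<le> B (Suc l)" for l unfolding k_def B_def by simp
  fix l i :: nat assume "l < i"
  then have "Suc l \<le> i" by simp
  then have "B (Suc l) \<le> B i" using Bm by (simp add: incseqD)
  then show "G (k l) l \<le> k i" using GB[of l] kB[of i] by linarith
qed

lemma select:
  fixes m :: "nat \<Rightarrow> nat \<Rightarrow> real"
  assumes col: "\<And>n F. finite F \<Longrightarrow> (\<Sum>j\<in>F. \<bar>m j n\<bar>) \<le> M" and \<epsilon>: "\<epsilon> > 0"
  shows "\<exists>s::nat \<Rightarrow> nat. strict_mono s \<and> (\<forall>i L. (\<Sum>l\<in>{..<L} - {i}. \<bar>m (s l) (s i)\<bar>) \<le> \<epsilon>)"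
proof -
  have rowb: "\<bar>m j n\<bar> \<le> M" for j n using col[of "{j}" n] by simp
  interpret S: subseqs "\<lambda>j s. convergent (\<lambda>k. m j (s k))"
  proof
    fix j and s :: "nat \<Rightarrow> nat" assume "strict_mono s"
    have "bounded (range (\<lambda>k. m j (s k)))"
      unfolding bounded_iff using rowb by (intro exI[of _ M]) auto
    then obtain l r where "strict_mono r" "((\<lambda>k. m j (s k)) \<circ> r) \<longlonglongrightarrow> l"
      using bounded_imp_convergent_subsequence by blast
    then show "\<exists>r'. strict_mono r' \<and> convergent (\<lambda>k. m j ((s \<circ> r') k))"
      by (intro exI[of _ r]) (auto simp: convergent_def o_def)
  qed
  define \<sigma> where "\<sigma> = S.diagseq"
  have \<sigma>m: "strict_mono \<sigma>" unfolding \<sigma>_def by (rule S.subseq_diagseq)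
  have convj: "convergent (\<lambda>k. m j (\<sigma> k))" for j
  proof -
    have "convergent (\<lambda>k. m j ((S.diagseq \<circ> (+) (Suc j)) k))"
    proof (rule S.diagseq_holds)
      fix r s n assume "strict_mono (r :: nat \<Rightarrow> nat)" "convergent (\<lambda>k. m n (s k))"
      then show "convergent (\<lambda>k. m n ((s \<circ> r) k))"
        by (auto simp: convergent_def o_def intro: LIMSEQ_subseq_LIMSEQ[unfolded o_def])
    qed
    then have "convergent (\<lambda>k. m j (\<sigma> (k + Suc j)))" unfolding \<sigma>_def by (simp add: o_def add.commute)
    then show ?thesis using convergent_ignore_initial_segment[of "\<lambda>k. m j (\<sigma> k)" "Suc j"] by simp
  qed
  define r where "r j = lim (\<lambda>k. m j (\<sigma> k))" for j
  have rl: "(\<lambda>k. m j (\<sigma> k)) \<longlonglongrightarrow> r j" for j unfolding r_def using convj by (simp add: convergent_LIMSEQ_iff)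
  have rF: "(\<Sum>j\<in>F. \<bar>r j\<bar>) \<le> M" if "finite F" for F
  proof -
    have "(\<lambda>k. \<Sum>j\<in>F. \<bar>m j (\<sigma> k)\<bar>) \<longlonglongrightarrow> (\<Sum>j\<in>F. \<bar>r j\<bar>)" by (intro tendsto_intros rl)
    then show ?thesis by (rule LIMSEQ_le_const2) (use col that in auto)
  qed
  have rs: "summable (\<lambda>j. \<bar>r j\<bar>)" by (rule summableI_nonneg_bounded[where x=M]) (use rF in auto)
  define e4 where "e4 = \<epsilon> / 4"
  have e4: "e4 > 0" unfolding e4_def using \<epsilon> by simp
  obtain N0 where N0: "\<And>F. finite F \<Longrightarrow> F \<subseteq> {N0..} \<Longrightarrow> (\<Sum>j\<in>F. \<bar>r j\<bar>) \<le> e4"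
    using tail_small[OF rs e4] by blast
  have cs: "summable (\<lambda>j. \<bar>m j n\<bar>)" for n by (rule summableI_nonneg_bounded[where x=M]) (use col in auto)
  have "\<forall>n. \<exists>T. \<forall>F. finite F \<longrightarrow> F \<subseteq> {T..} \<longrightarrow> (\<Sum>j\<in>F. \<bar>m j n\<bar>) \<le> e4"
    using tail_small[OF cs e4] by blast
  then obtain Tc where Tc: "\<And>n F. finite F \<Longrightarrow> F \<subseteq> {Tc n..} \<Longrightarrow> (\<Sum>j\<in>F. \<bar>m j n\<bar>) \<le> e4"
    by metis
  define \<eta> where "\<eta> l = e4 * (1/2) ^ Suc l" for l
  have \<eta>p: "\<eta> l > 0" for l unfolding \<eta>_def using e4 by simp
  have "\<forall>j l. \<exists>K. \<forall>k\<ge>K. \<bar>m j (\<sigma> k) - r j\<bar> \<le> \<eta> l"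
  proof (intro allI)
    fix j l
    obtain K where "\<forall>k\<ge>K. dist (m j (\<sigma> k)) (r j) < \<eta> l"
      using metric_LIMSEQ_D[OF rl \<eta>p] by blast
    then show "\<exists>K. \<forall>k\<ge>K. \<bar>m j (\<sigma> k) - r j\<bar> \<le> \<eta> l" by (auto simp: dist_real_def intro!: less_imp_le)
  qed
  then obtain Kc where Kc: "\<And>j l k. k \<ge> Kc j l \<Longrightarrow> \<bar>m j (\<sigma> k) - r j\<bar> \<le> \<eta> l" by metis
  define G where "G k l = max (Kc (\<sigma> k) l) (Tc (\<sigma> k))" for k l
  define k where "k i = fst (stp N0 G i)" for i
  have km: "strict_mono k" and k0: "k 0 = N0" and kG: "\<And>l i. l < i \<Longrightarrow> G (k l) l \<le> k i"
    using stp_props[where N=N0 and G=G] unfolding k_def by auto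
  define s where "s i = \<sigma> (k i)" for i
  have sm: "strict_mono s" unfolding s_def using \<sigma>m km by (simp add: strict_mono_def)
  have injs: "inj_on s A" for A using strict_mono_imp_inj_on[OF sm] by (rule inj_on_subset) (rule subset_UNIV)
  have sN0: "s l \<ge> N0" for l
  proof -
    have "N0 \<le> k l" using k0 km by (metis le0 strict_mono_less_eq)
    also have "k l \<le> \<sigma> (k l)" using seq_suble[OF \<sigma>m] .
    finally show ?thesis unfolding s_def .
  qed
  have "\<forall>i L. (\<Sum>l\<in>{..<L} - {i}. \<bar>m (s l) (s i)\<bar>) \<le> \<epsilon>"
  proof (intro allI)
    fix i L :: nat
    have split: "{..<L} - {i} = {l. l < L \<and> l < i} \<union> {l. l < L \<and> i < l}" by auto
    have "(\<Sum>l\<in>{..<L} - {i}. \<bar>m (s l) (s i)\<bar>)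
        = (\<Sum>l\<in>{l. l < L \<and> l < i}. \<bar>m (s l) (s i)\<bar>) + (\<Sum>l\<in>{l. l < L \<and> i < l}. \<bar>m (s l) (s i)\<bar>)"
      unfolding split by (rule sum.union_disjoint) auto
    also have "(\<Sum>l\<in>{l. l < L \<and> i < l}. \<bar>m (s l) (s i)\<bar>) \<le> e4"
    proof -
      have "(\<Sum>l\<in>{l. l < L \<and> i < l}. \<bar>m (s l) (s i)\<bar>) = (\<Sum>j\<in>s ` {l. l < L \<and> i < l}. \<bar>m j (s i)\<bar>)"
        by (simp add: sum.reindex[OF injs])
      also have "\<dots> \<le> e4"
      proof (rule Tc)
        show "finite (s ` {l. l < L \<and> i < l})" by simp
        show "s ` {l. l < L \<and> i < l} \<subseteq> {Tc (s i)..}"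
        proof
          fix j assume "j \<in> s ` {l. l < L \<and> i < l}"
          then obtain l where l: "i < l" "j = s l" by blast
          have "Tc (s i) \<le> G (k i) i" unfolding G_def s_def by simp
          also have "\<dots> \<le> k l" using kG[OF l(1)] .
          also have "k l \<le> s l" unfolding s_def using seq_suble[OF \<sigma>m] .
          finally show "j \<in> {Tc (s i)..}" using l by simp
        qed
      qed
      finally show ?thesis .
    qed
    also have "(\<Sum>l\<in>{l. l < L \<and> l < i}. \<bar>m (s l) (s i)\<bar>) \<le> (\<Sum>l\<in>{l. l < L \<and> l < i}. \<bar>r (s l)\<bar> + \<eta> l)"
    proof (rule sum_mono)
      fix l assume "l \<in> {l. l < L \<and> l < i}"
      then have li: "l < i" by simp
      have "Kc (s l) l \<le> G (k l) l" unfolding G_def s_def by simp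
      also have "\<dots> \<le> k i" using kG[OF li] .
      finally have "\<bar>m (s l) (\<sigma> (k i)) - r (s l)\<bar> \<le> \<eta> l" by (rule Kc)
      then show "\<bar>m (s l) (s i)\<bar> \<le> \<bar>r (s l)\<bar> + \<eta> l" unfolding s_def by linarith
    qed
    also have "\<dots> = (\<Sum>l\<in>{l. l < L \<and> l < i}. \<bar>r (s l)\<bar>) + (\<Sum>l\<in>{l. l < L \<and> l < i}. \<eta> l)"
      by (rule sum.distrib)
    also have "(\<Sum>l\<in>{l. l < L \<and> l < i}. \<bar>r (s l)\<bar>) \<le> e4"
    proof -
      have "(\<Sum>l\<in>{l. l < L \<and> l < i}. \<bar>r (s l)\<bar>) = (\<Sum>j\<in>s ` {l. l < L \<and> l < i}. \<bar>r j\<bar>)"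
        by (simp add: sum.reindex[OF injs])
      also have "\<dots> \<le> e4" by (rule N0) (use sN0 in auto)
      finally show ?thesis .
    qed
    also have "(\<Sum>l\<in>{l. l < L \<and> l < i}. \<eta> l) \<le> e4"
    proof -
      have "(\<Sum>l\<in>{l. l < L \<and> l < i}. \<eta> l) \<le> (\<Sum>l<i. \<eta> l)"
        by (rule sum_mono2) (use \<eta>p in \<open>auto intro: less_imp_le\<close>)
      also have "\<dots> = e4 * (\<Sum>l<i. (1/2) ^ Suc l)" unfolding \<eta>_def by (simp add: sum_distrib_left)
      also have "\<dots> \<le> e4 * 1" using geom_half_le e4 by (intro mult_left_mono) auto
      finally show ?thesis by simp
    qed
    finally show "(\<Sum>l\<in>{..<L} - {i}. \<bar>m (s l) (s i)\<bar>) \<le> \<epsilon>" using \<epsilon> unfolding e4_def by linarith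
  qed
  then show ?thesis using sm by blast
qed

lemma ell1_D: "f \<in> ell1 \<Longrightarrow> summable (\<lambda>n. \<bar>f n\<bar>)" unfolding ell1_def by simp

lemma ell1_norm_nonneg: "f \<in> ell1 \<Longrightarrow> ell1_norm f \<ge> 0"
  unfolding ell1_norm_def by (intro suminf_nonneg ell1_D) auto

lemma ell1_coord: "f \<in> ell1 \<Longrightarrow> \<bar>f j\<bar> \<le> ell1_norm f"
  unfolding ell1_norm_def using sum_le_suminf[OF ell1_D, of f "{j}"] by auto

lemma ell1_partial: "f \<in> ell1 \<Longrightarrow> (\<Sum>j<n. \<bar>f j\<bar>) \<le> ell1_norm f"
  unfolding ell1_norm_def using sum_le_suminf[OF ell1_D, of f "{..<n}"] by auto

lemma ell1_bounded_partial:
  assumes "\<And>n. (\<Sum>j<n. \<bar>f j\<bar>) \<le> C"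
  shows "f \<in> ell1" "ell1_norm f \<le> C"
proof -
  have s: "summable (\<lambda>j. \<bar>f j\<bar>)" by (rule summableI_nonneg_bounded[where x=C]) (use assms in auto)
  then show "f \<in> ell1" unfolding ell1_def by simp
  show "ell1_norm f \<le> C" unfolding ell1_norm_def by (rule suminf_le_const[OF s assms])
qed

lemma ell1_lin:
  assumes f: "f \<in> ell1" and g: "g \<in> ell1"
  shows "(\<lambda>n. a * f n + b * g n) \<in> ell1"
    and "ell1_norm (\<lambda>n. a * f n + b * g n) \<le> \<bar>a\<bar> * ell1_norm f + \<bar>b\<bar> * ell1_norm g"
proof -
  have b: "(\<Sum>j<n. \<bar>a * f j + b * g j\<bar>) \<le> \<bar>a\<bar> * ell1_norm f + \<bar>b\<bar> * ell1_norm g" for n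
  proof -
    have "(\<Sum>j<n. \<bar>a * f j + b * g j\<bar>) \<le> (\<Sum>j<n. \<bar>a\<bar> * \<bar>f j\<bar> + \<bar>b\<bar> * \<bar>g j\<bar>)"
      by (intro sum_mono) (metis abs_mult abs_triangle_ineq)
    also have "\<dots> = \<bar>a\<bar> * (\<Sum>j<n. \<bar>f j\<bar>) + \<bar>b\<bar> * (\<Sum>j<n. \<bar>g j\<bar>)"
      by (simp add: sum.distrib sum_distrib_left)
    also have "\<dots> \<le> \<bar>a\<bar> * ell1_norm f + \<bar>b\<bar> * ell1_norm g"
      using ell1_partial[OF f, of n] ell1_partial[OF g, of n]
      by (intro add_mono mult_left_mono) auto
    finally show ?thesis .
  qed
  show "(\<lambda>n. a * f n + b * g n) \<in> ell1" by (rule ell1_bounded_partial(1)[OF b])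
  show "ell1_norm (\<lambda>n. a * f n + b * g n) \<le> \<bar>a\<bar> * ell1_norm f + \<bar>b\<bar> * ell1_norm g"
    by (rule ell1_bounded_partial(2)[OF b])
qed

lemma ell1_zero: "(\<lambda>n. 0) \<in> ell1" unfolding ell1_def by simp

lemma ell1_norm_eq0:
  assumes "f \<in> ell1" "ell1_norm f \<le> 0" shows "f = (\<lambda>n. 0)"
proof
  fix j show "f j = 0" using ell1_coord[OF assms(1), of j] assms(2) by simp
qed

definition Eop :: "(nat \<Rightarrow> nat \<Rightarrow> real) \<Rightarrow> (nat \<Rightarrow> real) \<Rightarrow> nat \<Rightarrow> real" where
  "Eop e f = (\<lambda>j. \<Sum>i. e j i * f i)"

locale small_mat =
  fixes e :: "nat \<Rightarrow> nat \<Rightarrow> real"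
  assumes col: "\<And>i F. finite F \<Longrightarrow> (\<Sum>j\<in>F. \<bar>e j i\<bar>) \<le> 1/4"
begin

lemma entry: "\<bar>e j i\<bar> \<le> 1/4" using col[of "{j}" i] by simp

lemma row_summable:
  assumes f: "f \<in> ell1" shows "summable (\<lambda>i. \<bar>e j i * f i\<bar>)" "summable (\<lambda>i. e j i * f i)"
proof -
  show s: "summable (\<lambda>i. \<bar>e j i * f i\<bar>)"
  proof (rule summable_comparison_test'[OF summable_mult[OF ell1_D[OF f], of "1/4"]])
    fix n
    have "\<bar>e j n\<bar> * \<bar>f n\<bar> \<le> 1/4 * \<bar>f n\<bar>" using entry[of j n] by (intro mult_right_mono) auto
    then show "norm \<bar>e j n * f n\<bar> \<le> 1/4 * \<bar>f n\<bar>" by (simp add: abs_mult)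
  qed
  show "summable (\<lambda>i. e j i * f i)" using summable_rabs_cancel[OF s] .
qed

lemma Eop_ell1:
  assumes f: "f \<in> ell1"
  shows "Eop e f \<in> ell1" "ell1_norm (Eop e f) \<le> 1/4 * ell1_norm f"
proof -
  have b: "(\<Sum>j<n. \<bar>Eop e f j\<bar>) \<le> 1/4 * ell1_norm f" for n
  proof -
    have "(\<Sum>j<n. \<bar>Eop e f j\<bar>) \<le> (\<Sum>j<n. \<Sum>i. \<bar>e j i * f i\<bar>)"
      unfolding Eop_def by (intro sum_mono summable_rabs row_summable(1)[OF f])
    also have "\<dots> = (\<Sum>i. \<Sum>j<n. \<bar>e j i * f i\<bar>)"
      by (rule suminf_sum[symmetric]) (rule row_summable(1)[OF f])
    also have "\<dots> \<le> (\<Sum>i. 1/4 * \<bar>f i\<bar>)"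
    proof (rule suminf_le)
      fix i
      have "(\<Sum>j<n. \<bar>e j i * f i\<bar>) = (\<Sum>j<n. \<bar>e j i\<bar>) * \<bar>f i\<bar>" by (simp add: abs_mult sum_distrib_right)
      also have "\<dots> \<le> 1/4 * \<bar>f i\<bar>" using col[of "{..<n}" i] by (intro mult_right_mono) auto
      finally show "(\<Sum>j<n. \<bar>e j i * f i\<bar>) \<le> 1/4 * \<bar>f i\<bar>" .
    next
      show "summable (\<lambda>i. \<Sum>j<n. \<bar>e j i * f i\<bar>)" by (intro summable_sum row_summable(1)[OF f])
      show "summable (\<lambda>i. 1/4 * \<bar>f i\<bar>)" by (intro summable_mult ell1_D[OF f])
    qed
    also have "\<dots> = 1/4 * ell1_norm f" unfolding ell1_norm_def by (rule suminf_mult[OF ell1_D[OF f]])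
    finally show ?thesis .
  qed
  show "Eop e f \<in> ell1" by (rule ell1_bounded_partial(1)[OF b])
  show "ell1_norm (Eop e f) \<le> 1/4 * ell1_norm f" by (rule ell1_bounded_partial(2)[OF b])
qed

lemma Eop_lin:
  assumes f: "f \<in> ell1" and g: "g \<in> ell1"
  shows "Eop e (\<lambda>n. a * f n + b * g n) = (\<lambda>j. a * Eop e f j + b * Eop e g j)"
proof
  fix j
  have "Eop e (\<lambda>n. a * f n + b * g n) j = (\<Sum>i. a * (e j i * f i) + b * (e j i * g i))"
    unfolding Eop_def by (simp add: algebra_simps)
  also have "\<dots> = (\<Sum>i. a * (e j i * f i)) + (\<Sum>i. b * (e j i * g i))"
    by (rule suminf_add[symmetric]) (intro summable_mult row_summable(2) f g)+
  also have "\<dots> = a * Eop e f j + b * Eop e g j"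
    unfolding Eop_def by (simp add: suminf_mult row_summable(2) f g)
  finally show "Eop e (\<lambda>n. a * f n + b * g n) j = a * Eop e f j + b * Eop e g j" .
qed

end

lemma ell1_uminus: "f \<in> ell1 \<Longrightarrow> (\<lambda>j. - f j) \<in> ell1" unfolding ell1_def by simp
lemma ell1_norm_uminus: "ell1_norm (\<lambda>j. - f j) = ell1_norm f" unfolding ell1_norm_def by simp

lemma conv_by_bound:
  fixes a :: "nat \<Rightarrow> real"
  assumes ab: "\<And>K. \<bar>a K - L\<bar> \<le> c * (1/4) ^ K"
  shows "a \<longlonglongrightarrow> L"
proof -
  have l0: "(\<lambda>K. c * (1/4::real) ^ K) \<longlonglongrightarrow> c * 0" by (rule tendsto_mult[OF tendsto_const LIMSEQ_power_zero]) simp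
  have l1: "(\<lambda>K. c * (1/4::real) ^ K) \<longlonglongrightarrow> 0" using l0 by simp
  have ev: "eventually (\<lambda>K. norm (a K - L) \<le> c * (1/4) ^ K) sequentially"
    by (rule always_eventually) (simp add: ab)
  have "(\<lambda>K. a K - L) \<longlonglongrightarrow> 0" by (rule Lim_null_comparison[OF ev l1])
  then show ?thesis by (rule LIM_zero_cancel)
qed

context small_mat
begin

fun Dseq :: "(nat \<Rightarrow> real) \<Rightarrow> nat \<Rightarrow> nat \<Rightarrow> real" where
  "Dseq h 0 = h"
| "Dseq h (Suc k) = (\<lambda>j. - Eop e (Dseq h k) j)"

lemma Dseq_ell1:
  assumes h: "h \<in> ell1"
  shows "Dseq h k \<in> ell1 \<and> ell1_norm (Dseq h k) \<le> (1/4) ^ k * ell1_norm h"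
proof (induction k)
  case 0 then show ?case using h by simp
next
  case (Suc k)
  then have d: "Dseq h k \<in> ell1" by simp
  have "ell1_norm (Dseq h (Suc k)) = ell1_norm (Eop e (Dseq h k))" by (simp add: ell1_norm_uminus)
  also have "\<dots> \<le> 1/4 * ell1_norm (Dseq h k)" by (rule Eop_ell1(2)[OF d])
  also have "\<dots> \<le> 1/4 * ((1/4) ^ k * ell1_norm h)" using Suc by simp
  finally show ?case using ell1_uminus[OF Eop_ell1(1)[OF d]] by simp
qed

definition Nsol :: "(nat \<Rightarrow> real) \<Rightarrow> nat \<Rightarrow> real" where
  "Nsol h = (\<lambda>j. \<Sum>k. Dseq h k j)"

lemma geom4: "summable (\<lambda>k. (1/4::real) ^ k)" "(\<Sum>k. (1/4::real) ^ k) = 4/3"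
  using summable_geometric[of "1/4::real"] suminf_geometric[of "1/4::real"] by auto

lemma Dseq_coord_summable:
  assumes h: "h \<in> ell1"
  shows "summable (\<lambda>k. \<bar>Dseq h (k + K) j\<bar>)" "summable (\<lambda>k. Dseq h k j)"
proof -
  have b: "\<bar>Dseq h k j\<bar> \<le> ell1_norm h * (1/4) ^ k" for k
    using ell1_coord[of "Dseq h k" j] Dseq_ell1[OF h, of k] by (simp add: mult.commute)
  have s: "summable (\<lambda>k. \<bar>Dseq h k j\<bar>)"
    by (rule summable_comparison_test'[OF summable_mult[OF geom4(1), of "ell1_norm h"]]) (use b in auto)
  show "summable (\<lambda>k. \<bar>Dseq h (k + K) j\<bar>)" using summable_ignore_initial_segment[OF s] .
  show "summable (\<lambda>k. Dseq h k j)" using summable_rabs_cancel[OF s] .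
qed

lemma Nsol_tail:
  assumes h: "h \<in> ell1"
  defines "P \<equiv> (\<lambda>K j. \<Sum>k<K. Dseq h k j)"
  shows "(\<lambda>j. Nsol h j - P K j) \<in> ell1" "ell1_norm (\<lambda>j. Nsol h j - P K j) \<le> 4/3 * ell1_norm h * (1/4) ^ K"
proof -
  have eq: "Nsol h j - P K j = (\<Sum>k. Dseq h (k + K) j)" for j
    unfolding Nsol_def P_def using suminf_minus_initial_segment[OF Dseq_coord_summable(2)[OF h], of K] by simp
  have b: "(\<Sum>j<n. \<bar>Nsol h j - P K j\<bar>) \<le> 4/3 * ell1_norm h * (1/4) ^ K" for n
  proof -
    have "(\<Sum>j<n. \<bar>Nsol h j - P K j\<bar>) \<le> (\<Sum>j<n. \<Sum>k. \<bar>Dseq h (k + K) j\<bar>)"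
      unfolding eq by (intro sum_mono summable_rabs Dseq_coord_summable(1)[OF h])
    also have "\<dots> = (\<Sum>k. \<Sum>j<n. \<bar>Dseq h (k + K) j\<bar>)"
      by (rule suminf_sum[symmetric]) (rule Dseq_coord_summable(1)[OF h])
    also have "\<dots> \<le> (\<Sum>k. ell1_norm h * (1/4) ^ K * (1/4) ^ k)"
    proof (rule suminf_le)
      fix k
      have "(\<Sum>j<n. \<bar>Dseq h (k + K) j\<bar>) \<le> ell1_norm (Dseq h (k + K))"
        by (rule ell1_partial[OF conjunct1[OF Dseq_ell1[OF h]]])
      also have "\<dots> \<le> (1/4) ^ (k + K) * ell1_norm h" by (rule conjunct2[OF Dseq_ell1[OF h]])
      also have "\<dots> = ell1_norm h * (1/4) ^ K * (1/4) ^ k" by (simp add: power_add)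
      finally show "(\<Sum>j<n. \<bar>Dseq h (k + K) j\<bar>) \<le> ell1_norm h * (1/4) ^ K * (1/4) ^ k" .
    next
      show "summable (\<lambda>k. \<Sum>j<n. \<bar>Dseq h (k + K) j\<bar>)" by (intro summable_sum Dseq_coord_summable(1)[OF h])
      show "summable (\<lambda>k. ell1_norm h * (1/4) ^ K * (1/4::real) ^ k)" by (intro summable_mult geom4(1))
    qed
    also have "\<dots> = 4/3 * ell1_norm h * (1/4) ^ K"
      using suminf_mult[OF geom4(1), of "ell1_norm h * (1/4) ^ K"] geom4(2) by simp
    finally show ?thesis .
  qed
  show "(\<lambda>j. Nsol h j - P K j) \<in> ell1" by (rule ell1_bounded_partial(1)[OF b])
  show "ell1_norm (\<lambda>j. Nsol h j - P K j) \<le> 4/3 * ell1_norm h * (1/4) ^ K" by (rule ell1_bounded_partial(2)[OF b])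
qed

lemma Nsol_ell1:
  assumes h: "h \<in> ell1"
  shows "Nsol h \<in> ell1" "ell1_norm (Nsol h) \<le> 4/3 * ell1_norm h"
  using Nsol_tail[OF h, of 0] by simp_all

lemma Nsol_eq:
  assumes h: "h \<in> ell1"
  shows "Nsol h j + Eop e (Nsol h) j = h j"
proof -
  define P where "P = (\<lambda>K j. \<Sum>k<K. Dseq h k j)"
  have tl: "(\<lambda>j. Nsol h j - P K j) \<in> ell1" "ell1_norm (\<lambda>j. Nsol h j - P K j) \<le> 4/3 * ell1_norm h * (1/4) ^ K" for K
    using Nsol_tail[OF h, of K] unfolding P_def by auto
  have N: "Nsol h \<in> ell1" by (rule Nsol_ell1(1)[OF h])
  have Pl: "P K \<in> ell1" for K
  proof -
    have "(\<lambda>j. 1 * Nsol h j + (-1) * (Nsol h j - P K j)) \<in> ell1" by (rule ell1_lin(1)[OF N tl(1)])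
    then show ?thesis by (simp add: fun_eq_iff)
  qed
  have EP: "Eop e (P K) j = - (\<Sum>k<K. Dseq h (Suc k) j)" for K
  proof -
    have "Eop e (P K) j = (\<Sum>i. \<Sum>k<K. e j i * Dseq h k i)"
      unfolding Eop_def P_def by (simp add: sum_distrib_left)
    also have "\<dots> = (\<Sum>k<K. \<Sum>i. e j i * Dseq h k i)"
      by (rule suminf_sum) (intro row_summable(2) conjunct1[OF Dseq_ell1[OF h]])
    also have "\<dots> = - (\<Sum>k<K. Dseq h (Suc k) j)" by (simp add: Eop_def sum_negf)
    finally show ?thesis .
  qed
  have lim1: "(\<lambda>K. Eop e (P K) j) \<longlonglongrightarrow> Eop e (Nsol h) j"
  proof (rule conv_by_bound[where c="1/4 * (4/3 * ell1_norm h)"])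
    fix K
    have "Eop e (\<lambda>n. 1 * Nsol h n + (-1) * P K n) = (\<lambda>j. 1 * Eop e (Nsol h) j + (-1) * Eop e (P K) j)"
      by (rule Eop_lin[OF N Pl])
    then have "Eop e (P K) j - Eop e (Nsol h) j = - Eop e (\<lambda>n. Nsol h n - P K n) j"
      by (simp add: fun_eq_iff)
    then have "\<bar>Eop e (P K) j - Eop e (Nsol h) j\<bar> \<le> ell1_norm (Eop e (\<lambda>n. Nsol h n - P K n))"
      using ell1_coord[OF Eop_ell1(1)[OF tl(1)]] by simp
    also have "\<dots> \<le> 1/4 * ell1_norm (\<lambda>n. Nsol h n - P K n)" by (rule Eop_ell1(2)[OF tl(1)])
    also have "\<dots> \<le> 1/4 * (4/3 * ell1_norm h * (1/4) ^ K)" using tl(2)[of K] by simp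
    finally show "\<bar>Eop e (P K) j - Eop e (Nsol h) j\<bar> \<le> 1/4 * (4/3 * ell1_norm h) * (1/4) ^ K" by simp
  qed
  have sS: "summable (\<lambda>k. Dseq h (Suc k) j)"
    using summable_ignore_initial_segment[OF Dseq_coord_summable(2)[OF h], of 1] by simp
  have lim2: "(\<lambda>K. Eop e (P K) j) \<longlonglongrightarrow> - (\<Sum>k. Dseq h (Suc k) j)"
    unfolding EP by (intro tendsto_intros summable_LIMSEQ sS)
  have "Eop e (Nsol h) j = - (\<Sum>k. Dseq h (Suc k) j)" using LIMSEQ_unique[OF lim1 lim2] .
  also have "(\<Sum>k. Dseq h (Suc k) j) = Nsol h j - h j"
    unfolding Nsol_def using suminf_split_head[OF Dseq_coord_summable(2)[OF h]] by simp
  finally show ?thesis by simp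
qed

lemma sol_unique:
  assumes f: "f \<in> ell1" and g: "g \<in> ell1" and eq: "\<And>j. f j + Eop e f j = g j + Eop e g j"
  shows "f = g"
proof -
  define d where "d = (\<lambda>n. 1 * f n + (-1) * g n)"
  have d: "d \<in> ell1" unfolding d_def by (rule ell1_lin(1)[OF f g])
  have Ed: "Eop e d = (\<lambda>j. 1 * Eop e f j + (-1) * Eop e g j)" unfolding d_def by (rule Eop_lin[OF f g])
  have dE: "d = (\<lambda>j. - Eop e d j)" unfolding Ed using eq by (auto simp: d_def fun_eq_iff algebra_simps)
  have "ell1_norm d = ell1_norm (\<lambda>j. - Eop e d j)" by (rule arg_cong[OF dE])
  also have "\<dots> = ell1_norm (Eop e d)" by (rule ell1_norm_uminus)
  also have "\<dots> \<le> 1/4 * ell1_norm d" by (rule Eop_ell1(2)[OF d])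
  finally have "ell1_norm d \<le> 0" using ell1_norm_nonneg[OF d] by simp
  then have "d = (\<lambda>n. 0)" by (rule ell1_norm_eq0[OF d])
  then show ?thesis by (auto simp: d_def fun_eq_iff)
qed

lemma Nsol_of:
  assumes f: "f \<in> ell1"
  shows "Nsol (\<lambda>j. f j + Eop e f j) = f"
proof -
  have h: "(\<lambda>j. f j + Eop e f j) \<in> ell1"
    using ell1_lin(1)[OF f Eop_ell1(1)[OF f], of 1 1] by simp
  show ?thesis by (rule sol_unique[OF Nsol_ell1(1)[OF h] f]) (use Nsol_eq[OF h] in simp)
qed

lemma Nsol_lin:
  assumes h1: "h1 \<in> ell1" and h2: "h2 \<in> ell1"
  shows "Nsol (\<lambda>n. a * h1 n + b * h2 n) = (\<lambda>n. a * Nsol h1 n + b * Nsol h2 n)"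
proof -
  have h: "(\<lambda>n. a * h1 n + b * h2 n) \<in> ell1" by (rule ell1_lin(1)[OF h1 h2])
  have N1: "Nsol h1 \<in> ell1" and N2: "Nsol h2 \<in> ell1" using Nsol_ell1 h1 h2 by auto
  have c: "(\<lambda>n. a * Nsol h1 n + b * Nsol h2 n) \<in> ell1" by (rule ell1_lin(1)[OF N1 N2])
  show ?thesis
  proof (rule sol_unique[OF Nsol_ell1(1)[OF h] c])
    fix j
    have "Nsol (\<lambda>n. a * h1 n + b * h2 n) j + Eop e (Nsol (\<lambda>n. a * h1 n + b * h2 n)) j = a * h1 j + b * h2 j"
      by (rule Nsol_eq[OF h])
    also have "\<dots> = a * (Nsol h1 j + Eop e (Nsol h1) j) + b * (Nsol h2 j + Eop e (Nsol h2) j)"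
      using Nsol_eq[OF h1, of j] Nsol_eq[OF h2, of j] by simp
    also have "\<dots> = (a * Nsol h1 j + b * Nsol h2 j) + Eop e (\<lambda>n. a * Nsol h1 n + b * Nsol h2 n) j"
      unfolding Eop_lin[OF N1 N2] by (simp add: algebra_simps)
    finally show "Nsol (\<lambda>n. a * h1 n + b * h2 n) j + Eop e (Nsol (\<lambda>n. a * h1 n + b * h2 n)) j =
        (a * Nsol h1 j + b * Nsol h2 j) + Eop e (\<lambda>n. a * Nsol h1 n + b * Nsol h2 n) j" .
  qed
qed

end

lemma apply_bcontfun_sum:
  fixes f :: "'i \<Rightarrow> ('x::topological_space \<Rightarrow>\<^sub>C 'y::real_normed_vector)"
  shows "apply_bcontfun (sum f F) x = (\<Sum>i\<in>F. apply_bcontfun (f i) x)"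
  by (induction F rule: infinite_finite_induct) auto

definition ind :: "nat \<Rightarrow> (nat \<Rightarrow>\<^sub>C real)" where
  "ind n = Bcontfun (\<lambda>k. if k = n then 1 else 0)"

lemma ind_apply: "apply_bcontfun (ind n) k = (if k = n then 1 else 0)"
proof -
  have "(\<lambda>k::nat. if k = n then 1 else 0::real) \<in> bcontfun"
    by (rule bcontfun_normI[where b=1]) auto
  then show ?thesis unfolding ind_def by (simp add: Bcontfun_inverse)
qed

lemma norm_ind: "norm (ind n) \<ge> 1"
  using norm_bounded[of "ind n" n] by (simp add: ind_apply)

lemma norm_signsum_ind:
  assumes F: "finite F" and e: "\<And>k. \<bar>\<epsilon> k\<bar> \<le> 1"
  shows "norm (\<Sum>k\<in>F. \<epsilon> k *\<^sub>R ind k) \<le> 1"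
proof (rule norm_bound)
  fix x
  have "apply_bcontfun (\<Sum>k\<in>F. \<epsilon> k *\<^sub>R ind k) x = (\<Sum>k\<in>F. \<epsilon> k * (if x = k then 1 else 0))"
    by (simp add: apply_bcontfun_sum ind_apply)
  also have "\<dots> = (if x \<in> F then \<epsilon> x else 0)"
    using F by (simp add: if_distrib sum.delta cong: if_cong)
  finally show "norm (apply_bcontfun (\<Sum>k\<in>F. \<epsilon> k *\<^sub>R ind k) x) \<le> 1" using e[of x] by simp
qed

lemma exists_norming:
  fixes V :: "'a::real_normed_vector \<Rightarrow>\<^sub>L 'a"
  assumes "norm V > r" "r \<ge> 0"
  shows "\<exists>a b. norm a \<le> 1 \<and> norm b \<le> 1 \<and> blinfun_apply a (blinfun_apply V b) > r"
proof -
  have "\<not> (\<forall>x. norm (blinfun_apply V x) \<le> r * norm x)"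
    using norm_blinfun_bound[of r V] assms by force
  then obtain x where x: "norm (blinfun_apply V x) > r * norm x" by (auto simp: not_le)
  then have x0: "x \<noteq> 0" using assms(2) by auto
  define b where "b = x /\<^sub>R norm x"
  have nb: "norm b = 1" unfolding b_def using x0 by simp
  have "norm (blinfun_apply V b) = norm (blinfun_apply V x) / norm x"
    unfolding b_def by (simp add: blinfun.scaleR_right divide_inverse_commute)
  also have "\<dots> > r" using x x0 by (simp add: field_simps)
  finally have Vb: "norm (blinfun_apply V b) > r" .
  obtain a :: "'a \<Rightarrow>\<^sub>L real" where a: "norm a \<le> 1" "blinfun_apply a (blinfun_apply V b) = norm (blinfun_apply V b)"
    using hb_norming by blast
  show ?thesis using a nb Vb by (intro exI[of _ a] exI[of _ b]) auto
qed

locale msetup =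
  fixes T0 :: "(nat \<Rightarrow>\<^sub>C real) \<Rightarrow> ('a::banach \<Rightarrow>\<^sub>L 'a)" and c0 Mb :: real
  assumes AP: "approximation_property TYPE('a)" and blT0: "bounded_linear T0"
    and c0: "c0 > 0" and low: "\<And>x. c0 * norm x \<le> norm (T0 x)"
    and up: "\<And>x. norm (T0 x) \<le> norm x * Mb"
begin

definition U :: "nat \<Rightarrow> ('a \<Rightarrow>\<^sub>L 'a)" where "U n = T0 (ind n)"

lemma normU: "norm (U n) \<ge> c0"
proof -
  have "c0 \<le> c0 * norm (ind n)" using c0 norm_ind[of n] by simp
  also have "\<dots> \<le> norm (U n)" unfolding U_def by (rule low)
  finally show ?thesis .
qed

lemma signsum:
  assumes F: "finite F" and e: "\<And>k. \<bar>\<epsilon> k\<bar> \<le> 1"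
  shows "norm (\<Sum>k\<in>F. \<epsilon> k *\<^sub>R U k) \<le> Mb"
proof -
  interpret T: bounded_linear T0 by (rule blT0)
  have "(\<Sum>k\<in>F. \<epsilon> k *\<^sub>R U k) = T0 (\<Sum>k\<in>F. \<epsilon> k *\<^sub>R ind k)"
    unfolding U_def by (simp add: T.sum T.scaleR)
  also have "norm \<dots> \<le> norm (\<Sum>k\<in>F. \<epsilon> k *\<^sub>R ind k) * Mb" by (rule up)
  also have "\<dots> \<le> 1 * Mb"
  proof (rule mult_right_mono)
    show "norm (\<Sum>k\<in>F. \<epsilon> k *\<^sub>R ind k) \<le> 1" by (rule norm_signsum_ind[OF F e])
    have "c0 * norm (ind 0) \<le> norm (ind 0) * Mb" using low[of "ind 0"] up[of "ind 0"] by linarith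
    then show "0 \<le> Mb" using c0 norm_ind[of 0] by (smt (verit) mult_le_cancel_left_pos mult.commute)
  qed
  finally show ?thesis by simp
qed

lemma Mb_pos: "Mb > 0"
proof -
  have "c0 * norm (ind 0) \<le> norm (ind 0) * Mb" using low[of "ind 0"] up[of "ind 0"] by linarith
  moreover have "norm (ind 0) \<ge> 1" by (rule norm_ind)
  ultimately show ?thesis using c0 by (smt (verit) mult_le_cancel_left_pos mult.commute)
qed

definition "\<delta> = c0 / 2"

lemma \<delta>_pos: "\<delta> > 0" unfolding \<delta>_def using c0 by simp

definition "abp n = (SOME p. norm (fst p) \<le> 1 \<and> norm (snd p) \<le> 1 \<and> blinfun_apply (fst p) (blinfun_apply (U n) (snd p)) > \<delta>)"
definition "av n = fst (abp n)"
definition "bv n = snd (abp n)"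

lemma ab: "norm (av n) \<le> 1" "norm (bv n) \<le> 1" "blinfun_apply (av n) (blinfun_apply (U n) (bv n)) > \<delta>"
proof -
  have "norm (U n) > \<delta>" using normU[of n] c0 unfolding \<delta>_def by simp
  then obtain a b where "norm a \<le> 1" "norm b \<le> 1" "blinfun_apply a (blinfun_apply (U n) b) > \<delta>"
    using exists_norming[of \<delta> "U n"] \<delta>_pos by auto
  then have "\<exists>p. norm (fst p) \<le> 1 \<and> norm (snd p) \<le> 1 \<and> blinfun_apply (fst p) (blinfun_apply (U n) (snd p)) > \<delta>"
    by (intro exI[of _ "(a, b)"]) simp
  then have "norm (fst (abp n)) \<le> 1 \<and> norm (snd (abp n)) \<le> 1 \<and> blinfun_apply (fst (abp n)) (blinfun_apply (U n) (snd (abp n))) > \<delta>"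
    unfolding abp_def by (rule someI_ex)
  then show "norm (av n) \<le> 1" "norm (bv n) \<le> 1" "blinfun_apply (av n) (blinfun_apply (U n) (bv n)) > \<delta>"
    unfolding av_def bv_def by auto
qed

definition "m j n = blinfun_apply (av n) (blinfun_apply (U j) (bv n))"

lemma colbound:
  assumes F: "finite F" shows "(\<Sum>j\<in>F. \<bar>m j n\<bar>) \<le> Mb"
proof -
  define W where "W = (\<Sum>j\<in>F. sgn (m j n) *\<^sub>R U j)"
  have "(\<Sum>j\<in>F. \<bar>m j n\<bar>) = (\<Sum>j\<in>F. sgn (m j n) * m j n)" by (simp add: abs_sgn mult.commute)
  also have "\<dots> = blinfun_apply (av n) (blinfun_apply W (bv n))"
    unfolding W_def m_def by (simp add: blinfun.sum_left blinfun.sum_right blinfun.scaleR_left blinfun.scaleR_right)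
  also have "\<dots> \<le> norm (av n) * norm (blinfun_apply W (bv n))"
    using norm_blinfun[of "av n" "blinfun_apply W (bv n)"] by simp
  also have "\<dots> \<le> 1 * (norm W * 1)"
  proof (rule mult_mono)
    show "norm (av n) \<le> 1" by (rule ab)
    have "norm (blinfun_apply W (bv n)) \<le> norm W * norm (bv n)" by (rule norm_blinfun)
    also have "\<dots> \<le> norm W * 1" using ab(2) by (intro mult_left_mono) auto
    finally show "norm (blinfun_apply W (bv n)) \<le> norm W * 1" .
  qed auto
  also have "\<dots> \<le> Mb" unfolding W_def using signsum[OF F, of "\<lambda>j. sgn (m j n)"] by (simp add: abs_sgn_eq)
  finally show ?thesis .
qed

definition "sq = (SOME s::nat \<Rightarrow> nat. strict_mono s \<and> (\<forall>i L. (\<Sum>l\<in>{..<L} - {i}. \<bar>m (s l) (s i)\<bar>) \<le> \<delta> / 4))"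

lemma sq: "strict_mono sq" "\<And>i L. (\<Sum>l\<in>{..<L} - {i}. \<bar>m (sq l) (sq i)\<bar>) \<le> \<delta> / 4"
proof -
  have "\<exists>s::nat \<Rightarrow> nat. strict_mono s \<and> (\<forall>i L. (\<Sum>l\<in>{..<L} - {i}. \<bar>m (s l) (s i)\<bar>) \<le> \<delta> / 4)"
    by (rule select[where M=Mb]) (use colbound \<delta>_pos in auto)
  then have "strict_mono sq \<and> (\<forall>i L. (\<Sum>l\<in>{..<L} - {i}. \<bar>m (sq l) (sq i)\<bar>) \<le> \<delta> / 4)"
    unfolding sq_def by (rule someI_ex)
  then show "strict_mono sq" "\<And>i L. (\<Sum>l\<in>{..<L} - {i}. \<bar>m (sq l) (sq i)\<bar>) \<le> \<delta> / 4" by auto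
qed

end

context msetup
begin

definition "aa i = av (sq i)"
definition "bb i = bv (sq i)"
definition "dd i = m (sq i) (sq i)"
definition "ee j i = (if j = i then 0 else m (sq j) (sq i) / dd j)"

lemma dd: "dd i > \<delta>" unfolding dd_def m_def using ab(3) .

lemma ee_small: "small_mat ee"
proof
  fix i and F :: "nat set" assume F: "finite F"
  obtain L where L: "F \<subseteq> {..<L}" using finite_nat_bounded[OF F] by blast
  have "(\<Sum>j\<in>F. \<bar>ee j i\<bar>) = (\<Sum>j\<in>F - {i}. \<bar>ee j i\<bar>)"
    using F by (intro sum.mono_neutral_right) (auto simp: ee_def)
  also have "\<dots> \<le> (\<Sum>j\<in>F - {i}. \<bar>m (sq j) (sq i)\<bar> / \<delta>)"
  proof (rule sum_mono)
    fix j assume "j \<in> F - {i}"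
    then have "ee j i = m (sq j) (sq i) / dd j" unfolding ee_def by simp
    then show "\<bar>ee j i\<bar> \<le> \<bar>m (sq j) (sq i)\<bar> / \<delta>"
      using dd[of j] \<delta>_pos by (simp add: abs_div frac_le)
  qed
  also have "\<dots> \<le> (\<Sum>j\<in>{..<L} - {i}. \<bar>m (sq j) (sq i)\<bar> / \<delta>)"
    by (rule sum_mono2) (use L \<delta>_pos in auto)
  also have "\<dots> = (\<Sum>j\<in>{..<L} - {i}. \<bar>m (sq j) (sq i)\<bar>) / \<delta>" by (simp add: sum_divide_distrib)
  also have "\<dots> \<le> (\<delta> / 4) / \<delta>" using sq(2)[of i L] \<delta>_pos by (intro divide_right_mono) auto
  also have "\<dots> = 1/4" using \<delta>_pos by simp
  finally show "(\<Sum>j\<in>F. \<bar>ee j i\<bar>) \<le> 1/4" .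
qed

interpretation E: small_mat ee by (rule ee_small)

definition "J f = nucop (\<lambda>i. f i *\<^sub>R aa i) bb"

lemma J_summable:
  assumes f: "f \<in> ell1"
  shows "summable (\<lambda>i. norm (f i *\<^sub>R aa i) * norm (bb i))"
    and "(\<Sum>i. norm (f i *\<^sub>R aa i) * norm (bb i)) \<le> ell1_norm f"
proof -
  have b: "norm (f i *\<^sub>R aa i) * norm (bb i) \<le> \<bar>f i\<bar>" for i
  proof -
    have "norm (f i *\<^sub>R aa i) * norm (bb i) = \<bar>f i\<bar> * (norm (aa i) * norm (bb i))" by simp
    also have "\<dots> \<le> \<bar>f i\<bar> * (1 * 1)"
      using ab(1)[of "sq i"] ab(2)[of "sq i"] unfolding aa_def bb_def
      by (intro mult_left_mono mult_mono) auto
    finally show ?thesis by simp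
  qed
  show s: "summable (\<lambda>i. norm (f i *\<^sub>R aa i) * norm (bb i))"
    by (rule summable_comparison_test'[OF ell1_D[OF f]]) (use b in auto)
  show "(\<Sum>i. norm (f i *\<^sub>R aa i) * norm (bb i)) \<le> ell1_norm f"
    unfolding ell1_norm_def by (rule suminf_le[OF b s ell1_D[OF f]])
qed

lemma J_rep: "f \<in> ell1 \<Longrightarrow> nuclear_rep (J f) (\<lambda>i. f i *\<^sub>R aa i) bb"
  unfolding J_def by (rule nucop_rep[OF J_summable(1)])

lemma J_nuclear: "f \<in> ell1 \<Longrightarrow> J f \<in> nuclear_ops"
  unfolding nuclear_ops_def using J_rep by blast

lemma J_norm: "f \<in> ell1 \<Longrightarrow> nuclear_norm (J f) \<le> ell1_norm f"
  using nuclear_norm_le[OF J_rep] J_summable(2) by (rule order_trans)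

lemma J_lin:
  assumes f: "f \<in> ell1" and g: "g \<in> ell1"
  shows "J (\<lambda>n. a * f n + b * g n) = a *\<^sub>R J f + b *\<^sub>R J g"
proof (rule blinfun_eqI)
  fix x
  have fg: "(\<lambda>n. a * f n + b * g n) \<in> ell1" by (rule ell1_lin(1)[OF f g])
  have s1: "summable (\<lambda>i. blinfun_apply (f i *\<^sub>R aa i) x *\<^sub>R bb i)"
    by (rule nuc_summable_apply(2)[OF J_summable(1)[OF f]])
  have s2: "summable (\<lambda>i. blinfun_apply (g i *\<^sub>R aa i) x *\<^sub>R bb i)"
    by (rule nuc_summable_apply(2)[OF J_summable(1)[OF g]])
  have "blinfun_apply (J (\<lambda>n. a * f n + b * g n)) x = (\<Sum>i. blinfun_apply ((a * f i + b * g i) *\<^sub>R aa i) x *\<^sub>R bb i)"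
    using nuclear_rep_apply[OF J_rep[OF fg]] .
  also have "\<dots> = (\<Sum>i. a *\<^sub>R (blinfun_apply (f i *\<^sub>R aa i) x *\<^sub>R bb i) + b *\<^sub>R (blinfun_apply (g i *\<^sub>R aa i) x *\<^sub>R bb i))"
    by (simp add: blinfun.add_left blinfun.scaleR_left algebra_simps)
  also have "\<dots> = a *\<^sub>R (\<Sum>i. blinfun_apply (f i *\<^sub>R aa i) x *\<^sub>R bb i) + b *\<^sub>R (\<Sum>i. blinfun_apply (g i *\<^sub>R aa i) x *\<^sub>R bb i)"
    using suminf_add[OF summable_scaleR_right[OF s1, of a] summable_scaleR_right[OF s2, of b]]
      suminf_scaleR_right[OF s1, of a] suminf_scaleR_right[OF s2, of b] by simp
  also have "\<dots> = blinfun_apply (a *\<^sub>R J f + b *\<^sub>R J g) x"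
    using nuclear_rep_apply[OF J_rep[OF f], of x] nuclear_rep_apply[OF J_rep[OF g], of x]
    by (simp add: blinfun.add_left blinfun.scaleR_left)
  finally show "blinfun_apply (J (\<lambda>n. a * f n + b * g n)) x = blinfun_apply (a *\<^sub>R J f + b *\<^sub>R J g) x" .
qed

definition "Phi j T = trv (U (sq j)) T / dd j"

lemma Phi_J:
  assumes f: "f \<in> ell1"
  shows "Phi j (J f) = f j + Eop ee f j"
proof -
  have r: "nuclear_rep (J f) (\<lambda>i. f i *\<^sub>R aa i) bb" by (rule J_rep[OF f])
  have e1: "(\<lambda>i. blinfun_apply (f i *\<^sub>R aa i) (blinfun_apply (U (sq j)) (bb i))) = (\<lambda>i. f i * m (sq j) (sq i))"
    unfolding m_def aa_def bb_def by (simp add: blinfun.scaleR_left)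
  have tr: "trv (U (sq j)) (J f) = (\<Sum>i. f i * m (sq j) (sq i))"
    using trv_rep[OF AP r] e1 by simp
  have st: "summable (\<lambda>i. f i * m (sq j) (sq i))" using nuc_tr_summable(2)[OF r, of "U (sq j)"] e1 by simp
  have ddp: "dd j \<noteq> 0" using dd[of j] \<delta>_pos by simp
  have e2: "(\<lambda>i. f i * m (sq j) (sq i) / dd j) = (\<lambda>i. ee j i * f i + (if i = j then f j else 0))"
    using ddp by (auto simp: ee_def dd_def fun_eq_iff)
  have "Phi j (J f) = (\<Sum>i. f i * m (sq j) (sq i) / dd j)"
    unfolding Phi_def tr by (rule suminf_divide[OF st, symmetric])
  also have "\<dots> = (\<Sum>i. ee j i * f i + (if i = j then f j else 0))" unfolding e2 ..
  also have "\<dots> = (\<Sum>i. ee j i * f i) + (\<Sum>i. if i = j then f j else 0)"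
    by (rule suminf_add[symmetric]) (auto intro: E.row_summable(2)[OF f] sums_summable[OF sums_single])
  also have "(\<Sum>i. if i = j then f j else 0) = f j" using sums_single[of j "\<lambda>_. f j"] sums_unique by fastforce
  finally show ?thesis unfolding Eop_def by simp
qed

lemma trvF:
  assumes T: "T \<in> nuclear_ops" and F: "finite F"
  shows "(\<Sum>k\<in>F. \<bar>trv (U k) T\<bar>) \<le> Mb * nuclear_norm T"
proof (rule nuclear_norm_ge[OF T])
  show "Mb \<ge> 0" using Mb_pos by simp
next
  fix xs ys assume r: "nuclear_rep T xs ys"
  define \<sigma> where "\<sigma> k = sgn (trv (U k) T)" for k
  define W where "W = (\<Sum>k\<in>F. \<sigma> k *\<^sub>R U k)"
  have "(\<Sum>k\<in>F. \<bar>trv (U k) T\<bar>) = (\<Sum>k\<in>F. \<sigma> k * trv (U k) T)"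
    unfolding \<sigma>_def by (simp add: abs_sgn mult.commute)
  also have "\<dots> = (\<Sum>k\<in>F. \<Sum>n. \<sigma> k * blinfun_apply (xs n) (blinfun_apply (U k) (ys n)))"
    by (simp add: trv_rep[OF AP r] suminf_mult nuc_tr_summable(2)[OF r])
  also have "\<dots> = (\<Sum>n. \<Sum>k\<in>F. \<sigma> k * blinfun_apply (xs n) (blinfun_apply (U k) (ys n)))"
    by (rule suminf_sum[symmetric]) (intro summable_mult nuc_tr_summable(2)[OF r])
  also have "\<dots> = (\<Sum>n. blinfun_apply (xs n) (blinfun_apply W (ys n)))"
    unfolding W_def by (simp add: blinfun.sum_left blinfun.sum_right blinfun.scaleR_left blinfun.scaleR_right)
  also have "\<dots> = trv W T" by (rule trv_rep[OF AP r, symmetric])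
  also have "\<dots> \<le> \<bar>trv W T\<bar>" by simp
  also have "\<dots> \<le> norm W * (\<Sum>n. norm (xs n) * norm (ys n))" by (rule trv_bound_rep[OF AP r])
  also have "\<dots> \<le> Mb * (\<Sum>n. norm (xs n) * norm (ys n))"
  proof (rule mult_right_mono)
    show "norm W \<le> Mb" unfolding W_def by (rule signsum[OF F]) (simp add: \<sigma>_def abs_sgn_eq)
    show "0 \<le> (\<Sum>n. norm (xs n) * norm (ys n))" by (intro suminf_nonneg nuclear_rep_summable[OF r]) auto
  qed
  finally show "(\<Sum>k\<in>F. \<bar>trv (U k) T\<bar>) \<le> Mb * (\<Sum>n. norm (xs n) * norm (ys n))" .
qed

lemma Phi_ell1:
  assumes T: "T \<in> nuclear_ops"
  shows "(\<lambda>j. Phi j T) \<in> ell1" "ell1_norm (\<lambda>j. Phi j T) \<le> Mb / \<delta> * nuclear_norm T"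
proof -
  have injs: "inj_on sq A" for A using strict_mono_imp_inj_on[OF sq(1)] by (rule inj_on_subset) (rule subset_UNIV)
  have b: "(\<Sum>j<n. \<bar>Phi j T\<bar>) \<le> Mb / \<delta> * nuclear_norm T" for n
  proof -
    have "(\<Sum>j<n. \<bar>Phi j T\<bar>) \<le> (\<Sum>j<n. \<bar>trv (U (sq j)) T\<bar> / \<delta>)"
    proof (rule sum_mono)
      fix j
      have "\<bar>Phi j T\<bar> = \<bar>trv (U (sq j)) T\<bar> / dd j" unfolding Phi_def using dd[of j] \<delta>_pos by simp
      also have "\<dots> \<le> \<bar>trv (U (sq j)) T\<bar> / \<delta>" using dd[of j] \<delta>_pos by (intro divide_left_mono) auto
      finally show "\<bar>Phi j T\<bar> \<le> \<bar>trv (U (sq j)) T\<bar> / \<delta>" .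
    qed
    also have "\<dots> = (\<Sum>k\<in>sq ` {..<n}. \<bar>trv (U k) T\<bar>) / \<delta>"
      by (simp add: sum.reindex[OF injs] sum_divide_distrib)
    also have "\<dots> \<le> (Mb * nuclear_norm T) / \<delta>"
      using trvF[OF T, of "sq ` {..<n}"] \<delta>_pos by (intro divide_right_mono) auto
    finally show ?thesis by simp
  qed
  show "(\<lambda>j. Phi j T) \<in> ell1" by (rule ell1_bounded_partial(1)[OF b])
  show "ell1_norm (\<lambda>j. Phi j T) \<le> Mb / \<delta> * nuclear_norm T" by (rule ell1_bounded_partial(2)[OF b])
qed

lemma Phi_lin:
  assumes S: "S \<in> nuclear_ops" and T: "T \<in> nuclear_ops"
  shows "Phi j (a *\<^sub>R S + b *\<^sub>R T) = a * Phi j S + b * Phi j T"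
  unfolding Phi_def trv_lincomb[OF AP S T] by (simp add: add_divide_distrib)

end

context msetup
begin

interpretation E: small_mat ee by (rule ee_small)

definition "Psi T = E.Nsol (\<lambda>j. Phi j T)"
definition "Pr T = J (Psi T)"

lemma Psi_ell1:
  assumes T: "T \<in> nuclear_ops"
  shows "Psi T \<in> ell1" "ell1_norm (Psi T) \<le> 4/3 * (Mb / \<delta> * nuclear_norm T)"
proof -
  show "Psi T \<in> ell1" unfolding Psi_def by (rule E.Nsol_ell1(1)[OF Phi_ell1(1)[OF T]])
  have "ell1_norm (Psi T) \<le> 4/3 * ell1_norm (\<lambda>j. Phi j T)"
    unfolding Psi_def by (rule E.Nsol_ell1(2)[OF Phi_ell1(1)[OF T]])
  also have "\<dots> \<le> 4/3 * (Mb / \<delta> * nuclear_norm T)" using Phi_ell1(2)[OF T] by simp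
  finally show "ell1_norm (Psi T) \<le> 4/3 * (Mb / \<delta> * nuclear_norm T)" .
qed

lemma Psi_J: "f \<in> ell1 \<Longrightarrow> Psi (J f) = f"
  unfolding Psi_def using Phi_J E.Nsol_of by simp

lemma result: "ell1_complemented_in_nuclear TYPE('a)"
proof -
  define cc where "cc = 3 * \<delta> / (4 * Mb)"
  define DD where "DD = 4 * Mb / (3 * \<delta>)"
  have h1: "J ` ell1 \<subseteq> nuclear_ops" using J_nuclear by blast
  have h2: "\<forall>f\<in>ell1. \<forall>g\<in>ell1. \<forall>a b. J (\<lambda>n. a * f n + b * g n) = a *\<^sub>R J f + b *\<^sub>R J g"
    using J_lin by blast
  have h3: "0 < cc" unfolding cc_def using \<delta>_pos Mb_pos by simp
  have h4: "\<forall>f\<in>ell1. cc * ell1_norm f \<le> nuclear_norm (J f) \<and> nuclear_norm (J f) \<le> 1 * ell1_norm f"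
  proof (intro ballI conjI)
    fix f assume f: "f \<in> ell1"
    show "nuclear_norm (J f) \<le> 1 * ell1_norm f" using J_norm[OF f] by simp
    have "ell1_norm f = ell1_norm (Psi (J f))" using Psi_J[OF f] by simp
    also have "\<dots> \<le> 4/3 * (Mb / \<delta> * nuclear_norm (J f))" by (rule Psi_ell1(2)[OF J_nuclear[OF f]])
    finally have ef: "ell1_norm f \<le> 4/3 * (Mb / \<delta> * nuclear_norm (J f))" .
    have "cc * ell1_norm f \<le> cc * (4/3 * (Mb / \<delta> * nuclear_norm (J f)))"
      using ef h3 by (intro mult_left_mono) auto
    also have "\<dots> = nuclear_norm (J f)" unfolding cc_def using \<delta>_pos Mb_pos by (simp add: field_simps)
    finally show "cc * ell1_norm f \<le> nuclear_norm (J f)" .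
  qed
  have h5: "linear_on_set nuclear_ops Pr"
    unfolding linear_on_set_def
  proof (intro ballI allI)
    fix S T :: "'a \<Rightarrow>\<^sub>L 'a" and a b :: real
    assume S: "S \<in> nuclear_ops" and T: "T \<in> nuclear_ops"
    have "Pr (a *\<^sub>R S + b *\<^sub>R T) = J (E.Nsol (\<lambda>j. a * Phi j S + b * Phi j T))"
      unfolding Pr_def Psi_def Phi_lin[OF S T] ..
    also have "E.Nsol (\<lambda>j. a * Phi j S + b * Phi j T) = (\<lambda>n. a * Psi S n + b * Psi T n)"
      unfolding Psi_def by (rule E.Nsol_lin[OF Phi_ell1(1)[OF S] Phi_ell1(1)[OF T]])
    also have "J (\<lambda>n. a * Psi S n + b * Psi T n) = a *\<^sub>R Pr S + b *\<^sub>R Pr T"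
      unfolding Pr_def by (rule J_lin[OF Psi_ell1(1)[OF S] Psi_ell1(1)[OF T]])
    finally show "Pr (a *\<^sub>R S + b *\<^sub>R T) = a *\<^sub>R Pr S + b *\<^sub>R Pr T" .
  qed
  have h6: "\<forall>T\<in>nuclear_ops. Pr (Pr T) = Pr T \<and> nuclear_norm (Pr T) \<le> DD * nuclear_norm T"
  proof (intro ballI conjI)
    fix T :: "'a \<Rightarrow>\<^sub>L 'a" assume T: "T \<in> nuclear_ops"
    show "Pr (Pr T) = Pr T" unfolding Pr_def using Psi_J[OF Psi_ell1(1)[OF T]] by simp
    have "nuclear_norm (Pr T) \<le> ell1_norm (Psi T)" unfolding Pr_def by (rule J_norm[OF Psi_ell1(1)[OF T]])
    also have "\<dots> \<le> 4/3 * (Mb / \<delta> * nuclear_norm T)" by (rule Psi_ell1(2)[OF T])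
    also have "\<dots> = DD * nuclear_norm T" unfolding DD_def using \<delta>_pos by (simp add: field_simps)
    finally show "nuclear_norm (Pr T) \<le> DD * nuclear_norm T" .
  qed
  have h7: "Pr ` nuclear_ops = J ` ell1"
  proof
    show "Pr ` nuclear_ops \<subseteq> J ` ell1" unfolding Pr_def using Psi_ell1(1) by blast
    show "J ` ell1 \<subseteq> Pr ` nuclear_ops"
    proof
      fix X :: "'a \<Rightarrow>\<^sub>L 'a" assume "X \<in> J ` ell1"
      then obtain f where f: "f \<in> ell1" "X = J f" by blast
      then have "X = Pr (J f)" unfolding Pr_def using Psi_J by simp
      then show "X \<in> Pr ` nuclear_ops" using J_nuclear[OF f(1)] by blast
    qed
  qed
  show ?thesis unfolding ell1_complemented_in_nuclear_def
    by (rule exI[of _ J], rule exI[of _ Pr], rule exI[of _ cc], rule exI[of _ 1], rule exI[of _ DD])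
       (intro conjI h1 h2 h3 h4 h5 h6 h7)
qed

end

theorem mainTheorem9:
  assumes "approximation_property TYPE('a::banach)"
    and "\<exists>T :: (nat \<Rightarrow>\<^sub>C real) \<Rightarrow> ('a \<Rightarrow>\<^sub>L 'a). iso_embedding T"
  shows "ell1_complemented_in_nuclear TYPE('a)"
proof -
  obtain T0 :: "(nat \<Rightarrow>\<^sub>C real) \<Rightarrow> ('a \<Rightarrow>\<^sub>L 'a)" where T0: "iso_embedding T0" using assms(2) by blast
  then have bl: "bounded_linear T0" and "\<exists>c>0. \<forall>x. c * norm x \<le> norm (T0 x)"
    unfolding iso_embedding_def by auto
  then obtain c0 where c0: "c0 > 0" "\<And>x. c0 * norm x \<le> norm (T0 x)" by blast
  obtain Mb where Mb: "\<And>x. norm (T0 x) \<le> norm x * Mb"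
    using bounded_linear.bounded[OF bl] by blast
  interpret msetup T0 c0 Mb
    by (rule msetup.intro) (use assms(1) bl c0 Mb in auto)
  show ?thesis by (rule result)
qed

end
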